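(* Let $H$ be a Krull monoid with class group $G$, and let $\emptyset\ne S\subseteq\mathfrak X(H)$ be finite. The following are equivalent: (a) there exists an absolutely irreducible $a\in H$ with $\mathrm{supp}(aH)=S$; (b) $S$ is minimal (w.r.t. inclusion) in $\{\mathrm{supp}(bH): b\in H\setminus H^\times\}$; (c) $S$ is minimal in $\{\mathrm{supp}(bH): b\in H \text{ irreducible}\}$; (d) the family $([\mathfrak p])_{\mathfrak p\in S}$ in $G$ is $\mathbb Z_{\ge0}$-linearly dependent, and every proper subfamily is $\mathbb Z_{\ge0}$-linearly independent; (e) the family $([\mathfrak p])_{\mathfrak p\in S}$ in $G$ is $\mathbb Z_{\ge0}$-linearly dependent, and every proper subfamily is $\mathbb Z$-linearly independent. Moreover, if these conditions hold, the absolutely irreducible element with support $S$ is unique up to associates.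
   Context: $H$ is a cancellative commutative monoid with unit group $H^\times$; it is a Krull monoid if it is $v$-noetherian and completely integrally closed. $\mathfrak X(H)$ denotes the set of nonempty divisorial prime ideals of $H$; every nonempty divisorial ideal $\mathfrak a$ is uniquely a divisorial product $\big(\prod_{\mathfrak p\in\mathfrak X(H)}\mathfrak p^{\mathsf v_\mathfrak p(\mathfrak a)}\big)_v$, and its support is $\mathrm{supp}(\mathfrak a)=\{\mathfrak p\in\mathfrak X(H):\mathsf v_\mathfrak p(\mathfrak a)>0\}$. The class group $G$ is the group of divisorial fractional ideals modulo principal ones, $[\mathfrak a]$ denotes the class of $\mathfrak a$, and $G$ is written additively. A family $(g_\mathfrak p)_{\mathfrak p\in S}$ is $\mathbb Z_{\ge0}$-linearly dependent if $\sum\alpha_\mathfrak p g_\mathfrak p=0$ for some nonzero $(\alpha_\mathfrak p)\in\mathbb Z_{\ge0}^S$ (the empty family counts as independent). Irreducible: non-unit not a product of two non-units. An irreducible $r$ is absolutely irreducible if for every $n$, every factorization of $r^n$ into irreducibles coincides, up to order and associates, with $r\cdots r$. *)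

theory Defs
  imports "HOL-Algebra.FiniteProduct"
begin

text \<open>
Convention: a cancellative commutative monoid H is represented (up to isomorphism)
as a submonoid of an abelian group written additively (the type 'a, which plays the
role of any group containing the quotient group of H). The monoid operation of H
is therefore written +, the identity is 0, and the quotient group is q(H) = H - H.
\<close>

definition submonoid_add :: "'a::ab_group_add set \<Rightarrow> bool" where
  "submonoid_add H \<longleftrightarrow> 0 \<in> H \<and> (\<forall>a\<in>H. \<forall>b\<in>H. a + b \<in> H)"

definition qgrp :: "'a::ab_group_add set \<Rightarrow> 'a set" where
  "qgrp H = {a - b | a b. a \<in> H \<and> b \<in> H}"

definition unitsH :: "'a::ab_group_add set \<Rightarrow> 'a set" where
  "unitsH H = {a \<in> H. - a \<in> H}"

definition nmul :: "nat \<Rightarrow> 'a::ab_group_add \<Rightarrow> 'a" where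
  "nmul n x = sum_list (replicate n x)"

definition vinv :: "'a::ab_group_add set \<Rightarrow> 'a set \<Rightarrow> 'a set" where
  "vinv H X = {x \<in> qgrp H. \<forall>y\<in>X. x + y \<in> H}"

definition vclos :: "'a::ab_group_add set \<Rightarrow> 'a set \<Rightarrow> 'a set" where
  "vclos H X = vinv H (vinv H X)"

definition div_ideal :: "'a::ab_group_add set \<Rightarrow> 'a set \<Rightarrow> bool" where
  "div_ideal H A \<longleftrightarrow> A \<subseteq> H \<and> vclos H A = A"

definition v_noetherian :: "'a::ab_group_add set \<Rightarrow> bool" where
  "v_noetherian H \<longleftrightarrow>
     (\<forall>f::nat \<Rightarrow> 'a set. (\<forall>i. div_ideal H (f i)) \<and> (\<forall>i. f i \<subseteq> f (Suc i))
        \<longrightarrow> (\<exists>N. \<forall>i\<ge>N. f i = f N))"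

definition completely_int_closed :: "'a::ab_group_add set \<Rightarrow> bool" where
  "completely_int_closed H \<longleftrightarrow>
     (\<forall>x\<in>qgrp H. (\<exists>c\<in>H. \<forall>n. c + nmul n x \<in> H) \<longrightarrow> x \<in> H)"

definition krull_monoid :: "'a::ab_group_add set \<Rightarrow> bool" where
  "krull_monoid H \<longleftrightarrow> submonoid_add H \<and> v_noetherian H \<and> completely_int_closed H"

definition prime_ideal :: "'a::ab_group_add set \<Rightarrow> 'a set \<Rightarrow> bool" where
  "prime_ideal H P \<longleftrightarrow> P \<subseteq> H \<and> P \<noteq> H \<and> (\<forall>a\<in>P. \<forall>h\<in>H. a + h \<in> P)
     \<and> (\<forall>a\<in>H. \<forall>b\<in>H. a + b \<in> P \<longrightarrow> a \<in> P \<or> b \<in> P)"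

definition XH :: "'a::ab_group_add set \<Rightarrow> 'a set set" where
  "XH H = {P. P \<noteq> {} \<and> prime_ideal H P \<and> div_ideal H P}"

(* the (non-closed) product \<prod>_{p} p^{e p} of ideals, in additive notation *)
definition idprod :: "('a::ab_group_add set \<Rightarrow> nat) \<Rightarrow> 'a set" where
  "idprod e = {(\<Sum>P\<in>{Q. 0 < e Q}. \<Sum>i<e P. x P i) | x.
               \<forall>P\<in>{Q. 0 < e Q}. \<forall>i<e P. x P i \<in> P}"

definition vprod :: "'a::ab_group_add set \<Rightarrow> ('a set \<Rightarrow> nat) \<Rightarrow> 'a set" where
  "vprod H e = vclos H (idprod e)"

definition vval :: "'a::ab_group_add set \<Rightarrow> 'a set \<Rightarrow> 'a set \<Rightarrow> nat" where
  "vval H A P = (THE e. finite {Q. 0 < e Q} \<and> {Q. 0 < e Q} \<subseteq> XH H \<and> A = vprod H e) P"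

definition supp :: "'a::ab_group_add set \<Rightarrow> 'a set \<Rightarrow> 'a set set" where
  "supp H A = {P \<in> XH H. 0 < vval H A P}"

definition pideal :: "'a::ab_group_add set \<Rightarrow> 'a \<Rightarrow> 'a set" where
  "pideal H a = (\<lambda>h. a + h) ` H"

definition irred :: "'a::ab_group_add set \<Rightarrow> 'a \<Rightarrow> bool" where
  "irred H a \<longleftrightarrow> a \<in> H \<and> a \<notin> unitsH H \<and>
     (\<forall>b\<in>H. \<forall>c\<in>H. a = b + c \<longrightarrow> b \<in> unitsH H \<or> c \<in> unitsH H)"

definition associated :: "'a::ab_group_add set \<Rightarrow> 'a \<Rightarrow> 'a \<Rightarrow> bool" where
  "associated H a b \<longleftrightarrow> (\<exists>u\<in>unitsH H. b = a + u)"

definition abs_irred :: "'a::ab_group_add set \<Rightarrow> 'a \<Rightarrow> bool" where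
  "abs_irred H r \<longleftrightarrow> irred H r \<and>
     (\<forall>n xs. (\<forall>x\<in>set xs. irred H x) \<and> sum_list xs = nmul n r
        \<longrightarrow> length xs = n \<and> (\<forall>x\<in>set xs. associated H x r))"

definition frac_div :: "'a::ab_group_add set \<Rightarrow> 'a set \<Rightarrow> bool" where
  "frac_div H X \<longleftrightarrow> X \<noteq> {} \<and> X \<subseteq> qgrp H \<and> (\<exists>c\<in>H. (\<lambda>x. c + x) ` X \<subseteq> H)
     \<and> vclos H X = X"

definition cls :: "'a::ab_group_add set \<Rightarrow> 'a set \<Rightarrow> 'a set set" where
  "cls H A = {B. frac_div H B \<and> (\<exists>x\<in>qgrp H. B = (\<lambda>y. x + y) ` A)}"

definition setsum :: "'a::ab_group_add set \<Rightarrow> 'a set \<Rightarrow> 'a set" where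
  "setsum A B = {a + b | a b. a \<in> A \<and> b \<in> B}"

definition class_group :: "'a::ab_group_add set \<Rightarrow> 'a set set monoid" where
  "class_group H = \<lparr> carrier = cls H ` {X. frac_div H X},
     monoid.mult = (\<lambda>C D. cls H (vclos H (setsum (SOME A. A \<in> C) (SOME B. B \<in> D)))),
     one = cls H H \<rparr>"

end

theory Submission
  imports Defs
begin

definition tr :: "'a::ab_group_add \<Rightarrow> 'a set \<Rightarrow> 'a set" where
  "tr x X = (\<lambda>y. x + y) ` X"

locale kr =
  fixes H :: "'a::ab_group_add set"
  assumes K: "krull_monoid H"
begin

abbreviation "QG \<equiv> qgrp H"
abbreviation "iv \<equiv> vinv H"
abbreviation "vc \<equiv> vclos H"

lemma zeroH: "0 \<in> H" using K unfolding krull_monoid_def submonoid_add_def by auto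
lemma addH: "a \<in> H \<Longrightarrow> b \<in> H \<Longrightarrow> a + b \<in> H"
  using K unfolding krull_monoid_def submonoid_add_def by auto
lemma vnoeth: "v_noetherian H" using K unfolding krull_monoid_def by auto
lemma cic: "completely_int_closed H" using K unfolding krull_monoid_def by auto

lemma HQ: "H \<subseteq> QG"
proof
  fix a assume "a \<in> H" then show "a \<in> QG" unfolding qgrp_def using zeroH by force
qed

lemma QG_add: "x \<in> QG \<Longrightarrow> y \<in> QG \<Longrightarrow> x + y \<in> QG"
proof -
  assume "x \<in> QG" "y \<in> QG"
  then obtain a b c d where "x = a - b" "y = c - d" "a \<in> H" "b \<in> H" "c \<in> H" "d \<in> H"
    unfolding qgrp_def by auto
  then have "x + y = (a + c) - (b + d)" "a + c \<in> H" "b + d \<in> H" by (auto simp: addH algebra_simps)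
  then show ?thesis unfolding qgrp_def by blast
qed

lemma QG_neg: "x \<in> QG \<Longrightarrow> - x \<in> QG"
proof -
  assume "x \<in> QG"
  then obtain a b where "x = a - b" "a \<in> H" "b \<in> H" unfolding qgrp_def by auto
  then show ?thesis unfolding qgrp_def by force
qed

lemma QG_0: "0 \<in> QG" using HQ zeroH by auto

lemma QG_diff: "x \<in> QG \<Longrightarrow> y \<in> QG \<Longrightarrow> x - y \<in> QG"
  using QG_add QG_neg by (metis diff_conv_add_uminus)

lemma QG_cancel: "x \<in> QG \<Longrightarrow> x + y \<in> QG \<Longrightarrow> y \<in> QG"
  using QG_diff[of "x+y" x] by simp

lemma iv_sub: "iv X \<subseteq> QG" unfolding vinv_def by auto
lemma vc_sub: "vc X \<subseteq> QG" unfolding vclos_def by (rule iv_sub)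

lemma iv_anti: "X \<subseteq> Y \<Longrightarrow> iv Y \<subseteq> iv X" unfolding vinv_def by auto

lemma vc_ext: "X \<subseteq> QG \<Longrightarrow> X \<subseteq> vc X"
  unfolding vclos_def vinv_def by (auto simp: add.commute)

lemma iv_vc: "X \<subseteq> QG \<Longrightarrow> iv (vc X) = iv X"
proof
  assume X: "X \<subseteq> QG"
  show "iv (vc X) \<subseteq> iv X" using vc_ext[OF X] by (rule iv_anti)
  have "iv X \<subseteq> vc (iv X)" using iv_sub by (rule vc_ext)
  then show "iv X \<subseteq> iv (vc X)" unfolding vclos_def .
qed

lemma vc_idem: "X \<subseteq> QG \<Longrightarrow> vc (vc X) = vc X"
  unfolding vclos_def[of H "vc X"] using iv_vc by (simp add: vclos_def)

lemma vc_mono: "X \<subseteq> Y \<Longrightarrow> vc X \<subseteq> vc Y"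
  unfolding vclos_def by (intro iv_anti)

lemma tr_QG: "x \<in> QG \<Longrightarrow> X \<subseteq> QG \<Longrightarrow> tr x X \<subseteq> QG"
  unfolding tr_def using QG_add by auto

lemma iv_tr: "x \<in> QG \<Longrightarrow> iv (tr x X) = tr (-x) (iv X)"
proof (rule Set.set_eqI)
  fix z assume x: "x \<in> QG"
  have "z \<in> iv (tr x X) \<longleftrightarrow> z + x \<in> iv X"
    unfolding vinv_def tr_def using QG_add[OF _ x] QG_add[OF _ QG_neg[OF x], of "z + x"] QG_add[OF x]
    by (auto simp: add_ac) (metis add.commute)
  also have "\<dots> \<longleftrightarrow> z \<in> tr (-x) (iv X)"
    unfolding tr_def by (auto intro: image_eqI[where x="z+x"])
  finally show "z \<in> iv (tr x X) \<longleftrightarrow> z \<in> tr (- x) (iv X)" .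
qed

lemma vc_tr: "x \<in> QG \<Longrightarrow> vc (tr x X) = tr x (vc X)"
  unfolding vclos_def using iv_tr QG_neg by simp

lemma H_sub_iv: "X \<subseteq> H \<Longrightarrow> H \<subseteq> iv X"
  unfolding vinv_def using HQ addH by auto

lemma iv_H: "iv H = H"
proof
  show "H \<subseteq> iv H" by (rule H_sub_iv) simp
  show "iv H \<subseteq> H" unfolding vinv_def using zeroH by force
qed

lemma vc_H: "vc H = H" unfolding vclos_def by (simp add: iv_H)

lemma iv_0: "iv {0} = H" unfolding vinv_def using HQ by auto
lemma vc_0: "vc {0} = H" unfolding vclos_def by (simp add: iv_0 iv_H)

lemma vc_subH: "X \<subseteq> H \<Longrightarrow> vc X \<subseteq> H"
  unfolding vclos_def using iv_anti[OF H_sub_iv] iv_H by auto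

lemma ss_comm: "setsum A B = setsum B A"
  unfolding setsum_def by (auto simp: add.commute) (metis add.commute)+

lemma ss_assoc: "setsum (setsum A B) C = setsum A (setsum B C)"
proof (rule Set.set_eqI)
  fix z show "z \<in> setsum (setsum A B) C \<longleftrightarrow> z \<in> setsum A (setsum B C)"
    unfolding setsum_def
    apply safe
     apply (rule_tac x=aa in exI, rule_tac x="ba+b" in exI, force simp: add.assoc)
    apply (rule_tac x="a+aa" in exI, rule_tac x="ba" in exI, force simp: add.assoc)
    done
qed

lemma ss_QG: "A \<subseteq> QG \<Longrightarrow> B \<subseteq> QG \<Longrightarrow> setsum A B \<subseteq> QG"
  unfolding setsum_def using QG_add by auto

lemma ss_mono: "A \<subseteq> A' \<Longrightarrow> B \<subseteq> B' \<Longrightarrow> setsum A B \<subseteq> setsum A' B'"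
  unfolding setsum_def by auto

lemma ss_0: "setsum {0} A = A" unfolding setsum_def by auto

lemma ss_tr: "setsum (tr x A) B = tr x (setsum A B)"
proof (rule Set.set_eqI)
  fix z show "z \<in> setsum (tr x A) B \<longleftrightarrow> z \<in> tr x (setsum A B)"
    unfolding setsum_def tr_def
    apply safe
     apply (rule_tac x="xa+b" in image_eqI, simp add: add.assoc, blast)
    apply (rule_tac x="x+a" in exI, rule_tac x=b in exI, force simp: add.assoc)
    done
qed

lemma iv_ss_vc: assumes "X \<subseteq> QG" "Y \<subseteq> QG"
  shows "iv (setsum (vc X) Y) = iv (setsum X Y)"
proof
  show "iv (setsum (vc X) Y) \<subseteq> iv (setsum X Y)"
    by (rule iv_anti, rule ss_mono[OF vc_ext[OF assms(1)]]) simp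
  show "iv (setsum X Y) \<subseteq> iv (setsum (vc X) Y)"
  proof
    fix z assume z: "z \<in> iv (setsum X Y)"
    then have zQ: "z \<in> QG" unfolding vinv_def by auto
    have "z + w \<in> H" if "w \<in> setsum (vc X) Y" for w
    proof -
      from that obtain x' y where w: "w = x' + y" "x' \<in> vc X" "y \<in> Y" unfolding setsum_def by auto
      have "z + y \<in> iv X"
        unfolding vinv_def using z w(3) QG_add[OF zQ] assms(2)
        by (auto simp: vinv_def setsum_def add_ac) (metis add.assoc add.commute)
      then have "x' + (z + y) \<in> H" using w(2) unfolding vclos_def vinv_def by auto
      then show ?thesis using w by (simp add: add_ac)
    qed
    then show "z \<in> iv (setsum (vc X) Y)" unfolding vinv_def using zQ by auto
  qed
qed

lemma vc_ss_vc: "X \<subseteq> QG \<Longrightarrow> Y \<subseteq> QG \<Longrightarrow> vc (setsum (vc X) Y) = vc (setsum X Y)"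
  unfolding vclos_def[of H "setsum _ _"] using iv_ss_vc by simp

lemma vc_ss_vc2: "X \<subseteq> QG \<Longrightarrow> Y \<subseteq> QG \<Longrightarrow> vc (setsum X (vc Y)) = vc (setsum X Y)"
  using vc_ss_vc ss_comm by metis

end

context kr
begin

abbreviation "DF \<equiv> {A. frac_div H A}"
definition mul :: "'a set \<Rightarrow> 'a set \<Rightarrow> 'a set" where
  "mul A B = vc (setsum A B)"

lemma DF_QG: "frac_div H A \<Longrightarrow> A \<subseteq> QG" unfolding frac_div_def by auto
lemma DF_vc: "frac_div H A \<Longrightarrow> vc A = A" unfolding frac_div_def by auto

lemma nmul_Suc: "nmul (Suc n) x = x + nmul n x" unfolding nmul_def by simp
lemma nmul_0: "nmul 0 x = 0" unfolding nmul_def by simp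

lemma nmul_QG: "x \<in> QG \<Longrightarrow> nmul n x \<in> QG"
  by (induction n) (auto simp: nmul_Suc nmul_0 QG_0 QG_add)

lemma iv_DF_ne: assumes "frac_div H A" shows "\<exists>c\<in>H. c \<in> iv A"
proof -
  from assms obtain c where c: "c \<in> H" "(\<lambda>x. c + x) ` A \<subseteq> H" unfolding frac_div_def by auto
  then have "c \<in> iv A" unfolding vinv_def using HQ by auto
  with c show ?thesis by auto
qed

lemma krull_inv: assumes A: "frac_div H A" shows "mul A (iv A) = H"
proof -
  have "iv (setsum A (iv A)) = H"
  proof
    show "H \<subseteq> iv (setsum A (iv A))"
    proof
      fix h assume h: "h \<in> H"
      have "h + z \<in> H" if "z \<in> setsum A (iv A)" for z
      proof -
        from that obtain a b where "z = a + b" "a \<in> A" "b \<in> iv A" unfolding setsum_def by auto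
        then have "z \<in> H" unfolding vinv_def by (auto simp: add.commute)
        then show ?thesis using h addH by auto
      qed
      then show "h \<in> iv (setsum A (iv A))" unfolding vinv_def using h HQ by auto
    qed
    show "iv (setsum A (iv A)) \<subseteq> H"
    proof
      fix x assume x: "x \<in> iv (setsum A (iv A))"
      then have xQ: "x \<in> QG" unfolding vinv_def by auto
      have step: "x + b \<in> iv A" if "b \<in> iv A" for b
      proof -
        have bQ: "b \<in> QG" using that iv_sub by auto
        have "x + b + a \<in> H" if "a \<in> A" for a
          using x \<open>b \<in> iv A\<close> that unfolding vinv_def setsum_def
          by (auto simp: add_ac) (metis add.assoc add.commute)
        then show ?thesis unfolding vinv_def using QG_add[OF xQ bQ] by auto
      qed
      have pw: "nmul n x + b \<in> iv A" if "b \<in> iv A" for n b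
        using that by (induction n arbitrary: b) (auto simp: nmul_0 nmul_Suc add.assoc step)
      from iv_DF_ne[OF A] obtain b where b: "b \<in> iv A" by auto
      from A obtain a where a: "a \<in> A" unfolding frac_div_def by auto
      have "a + b \<in> H" using a b unfolding vinv_def by (auto simp: add.commute)
      moreover have "a + b + nmul n x \<in> H" for n
        using pw[OF b, of n] a unfolding vinv_def by (auto simp: add_ac)
      ultimately show "x \<in> H" using cic xQ unfolding completely_int_closed_def by blast
    qed
  qed
  then show ?thesis unfolding mul_def vclos_def by (simp add: iv_H)
qed

lemma DF_bounded: "frac_div H A \<Longrightarrow> \<exists>c\<in>H. tr c A \<subseteq> H"
  unfolding frac_div_def tr_def by auto

lemma tr_H_sub: "tr c A \<subseteq> H \<Longrightarrow> A \<subseteq> tr (-c) H"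
proof
  fix a assume "tr c A \<subseteq> H" "a \<in> A"
  then have "c + a \<in> H" unfolding tr_def by auto
  moreover have "a = -c + (c + a)" by simp
  ultimately show "a \<in> tr (-c) H" unfolding tr_def by blast
qed

lemma tr_tr: "tr x (tr y A) = tr (x + y) A" unfolding tr_def by (auto simp: image_image add.assoc)
lemma tr_0: "tr 0 A = A" unfolding tr_def by auto
lemma tr_mono: "A \<subseteq> B \<Longrightarrow> tr x A \<subseteq> tr x B" unfolding tr_def by auto

lemma DF_mul: assumes A: "frac_div H A" and B: "frac_div H B" shows "frac_div H (mul A B)"
proof -
  have AQ: "A \<subseteq> QG" and BQ: "B \<subseteq> QG" using A B by (auto simp: DF_QG)
  have ne: "setsum A B \<noteq> {}" using A B unfolding frac_div_def setsum_def by auto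
  have sub: "setsum A B \<subseteq> QG" using ss_QG AQ BQ .
  obtain c1 where c1: "c1 \<in> H" "tr c1 A \<subseteq> H" using DF_bounded[OF A] by auto
  obtain c2 where c2: "c2 \<in> H" "tr c2 B \<subseteq> H" using DF_bounded[OF B] by auto
  have "tr (c1 + c2) (setsum A B) \<subseteq> H"
  proof
    fix z assume "z \<in> tr (c1 + c2) (setsum A B)"
    then obtain a b where ab: "a \<in> A" "b \<in> B" "z = c1 + c2 + (a + b)" unfolding tr_def setsum_def by auto
    have "c1 + a \<in> H" "c2 + b \<in> H" using c1 c2 ab unfolding tr_def by auto
    then have "(c1 + a) + (c2 + b) \<in> H" by (rule addH)
    then show "z \<in> H" using ab by (simp add: algebra_simps)
  qed
  then have "setsum A B \<subseteq> tr (-(c1+c2)) H" by (rule tr_H_sub)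
  moreover have cQ: "-(c1+c2) \<in> QG" using QG_neg[OF QG_add] c1 c2 HQ by blast
  ultimately have "vc (setsum A B) \<subseteq> tr (-(c1+c2)) H"
    using vc_mono vc_tr[OF cQ, of H] vc_H by metis
  then have "tr (c1+c2) (vc (setsum A B)) \<subseteq> tr (c1+c2) (tr (-(c1+c2)) H)"
    by (rule tr_mono)
  moreover have "tr (c1+c2) (tr (-(c1+c2)) H) = H" unfolding tr_tr by (simp add: tr_0)
  ultimately have "tr (c1+c2) (vc (setsum A B)) \<subseteq> H" by simp
  moreover have "c1 + c2 \<in> H" using c1 c2 addH by auto
  ultimately show ?thesis unfolding frac_div_def mul_def
    using ne vc_ext[OF sub] vc_sub vc_idem[OF sub] by (auto simp: tr_def)
qed

lemma mul_comm: "mul A B = mul B A" unfolding mul_def using ss_comm by metis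

lemma mul_assoc: assumes "frac_div H A" "frac_div H B" "frac_div H C"
  shows "mul (mul A B) C = mul A (mul B C)"
proof -
  have Q: "A \<subseteq> QG" "B \<subseteq> QG" "C \<subseteq> QG" using assms DF_QG by auto
  have "mul (mul A B) C = vc (setsum (setsum A B) C)"
    unfolding mul_def by (rule vc_ss_vc) (use Q ss_QG in auto)
  also have "\<dots> = vc (setsum A (setsum B C))" by (simp add: ss_assoc)
  also have "\<dots> = mul A (mul B C)"
    unfolding mul_def by (rule vc_ss_vc2[symmetric]) (use Q ss_QG in auto)
  finally show ?thesis .
qed

lemma mul_H: assumes "frac_div H A" shows "mul H A = A"
proof -
  have "mul H A = vc (setsum (vc {0}) A)" unfolding mul_def vc_0 ..
  also have "\<dots> = vc (setsum {0} A)" using vc_ss_vc[of "{0}" A] DF_QG[OF assms] QG_0 by auto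
  also have "\<dots> = A" using ss_0[of A] DF_vc[OF assms] by argo
  finally show ?thesis .
qed

lemma mul_H2: "frac_div H A \<Longrightarrow> mul A H = A"
  using mul_H mul_comm by metis

lemma DF_H: "frac_div H H"
  unfolding frac_div_def using zeroH HQ vc_H by (auto intro!: bexI[of _ 0])

lemma DF_iv: assumes A: "frac_div H A" shows "frac_div H (iv A)"
proof -
  obtain c where c: "c \<in> H" "c \<in> iv A" using iv_DF_ne[OF A] by auto
  obtain a where a: "a \<in> A" using A unfolding frac_div_def by auto
  then obtain h1 h2 where h: "a = h1 - h2" "h1 \<in> H" "h2 \<in> H" using DF_QG[OF A] unfolding qgrp_def by auto
  have "(\<lambda>x. h1 + x) ` iv A \<subseteq> H"
  proof
    fix z assume "z \<in> (\<lambda>x. h1 + x) ` iv A"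
    then obtain y where y: "z = h1 + y" "y \<in> iv A" by auto
    then have "a + y \<in> H" using a unfolding vinv_def by (auto simp: add.commute)
    then have "a + y + h2 \<in> H" using addH h(3) by blast
    moreover have "a + y + h2 = z" using y h by (simp add: algebra_simps)
    ultimately show "z \<in> H" by simp
  qed
  moreover have "vc (iv A) = iv A" unfolding vclos_def using iv_vc[OF DF_QG[OF A]]
    by (simp add: vclos_def)
  ultimately show ?thesis unfolding frac_div_def using c h iv_sub by auto
qed

lemma mul_iv: "frac_div H A \<Longrightarrow> mul A (iv A) = H" by (rule krull_inv)

lemma mul_tr: assumes "x \<in> QG" shows "mul (tr x A) B = tr x (mul A B)"
  unfolding mul_def ss_tr using vc_tr[OF assms] by simp

lemma DF_tr: assumes A: "frac_div H A" and x: "x \<in> QG" shows "frac_div H (tr x A)"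
proof -
  have "tr x A = mul (tr x H) A" using mul_tr[OF x, of H A] mul_H[OF A] by simp
  moreover have "frac_div H (tr x H)"
  proof -
    obtain h1 h2 where h: "x = h1 - h2" "h1 \<in> H" "h2 \<in> H" using x unfolding qgrp_def by auto
    have "tr h2 (tr x H) \<subseteq> H" using h addH by (auto simp: tr_def algebra_simps)
    then show ?thesis unfolding frac_div_def using tr_QG[OF x HQ] vc_tr[OF x, of H] vc_H h zeroH
      by (auto simp: tr_def)
  qed
  ultimately show ?thesis using DF_mul A by simp
qed

lemma mul_mono: "A \<subseteq> B \<Longrightarrow> mul A C \<subseteq> mul B C"
  unfolding mul_def by (intro vc_mono ss_mono) auto

lemma mul_cancel_sub: assumes "frac_div H A" "frac_div H B" "frac_div H C"
  and "mul A C \<subseteq> mul B C" shows "A \<subseteq> B"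
proof -
  have "mul (mul A C) (iv C) \<subseteq> mul (mul B C) (iv C)" using assms(4) by (rule mul_mono)
  then show ?thesis using assms mul_assoc DF_iv mul_iv mul_H2 by metis
qed

lemma mul_cancel: assumes "frac_div H A" "frac_div H B" "frac_div H C"
  and "mul A C = mul B C" shows "A = B"
  using mul_cancel_sub assms by (metis order_refl subset_antisym)

lemma mul_sub_right: "frac_div H A \<Longrightarrow> frac_div H B \<Longrightarrow> A \<subseteq> H \<Longrightarrow> mul A B \<subseteq> B"
  using mul_mono[of A H B] mul_H by auto

lemma ss_sub_mul: "A \<subseteq> QG \<Longrightarrow> B \<subseteq> QG \<Longrightarrow> setsum A B \<subseteq> mul A B"
  unfolding mul_def using vc_ext ss_QG by auto

lemma XH_H: "P \<in> XH H \<Longrightarrow> P \<subseteq> H" unfolding XH_def prime_ideal_def by auto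
lemma XH_DF: assumes "P \<in> XH H" shows "frac_div H P"
  using assms XH_H[OF assms] HQ zeroH unfolding XH_def div_ideal_def frac_div_def
  by (auto intro!: bexI[of _ 0])

lemma prime_ss: assumes P: "P \<in> XH H" and "X \<subseteq> H" "Y \<subseteq> H" "setsum X Y \<subseteq> P"
  shows "X \<subseteq> P \<or> Y \<subseteq> P"
proof (rule ccontr)
  assume "\<not> (X \<subseteq> P \<or> Y \<subseteq> P)"
  then obtain x y where "x \<in> X" "x \<notin> P" "y \<in> Y" "y \<notin> P" by auto
  moreover have "x + y \<in> P" using assms(4) calculation unfolding setsum_def by auto
  ultimately show False using P assms(2,3) unfolding XH_def prime_ideal_def by blast
qed

lemma prime_mul: assumes P: "P \<in> XH H" and "A \<subseteq> H" "B \<subseteq> H" "mul A B \<subseteq> P"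
  shows "A \<subseteq> P \<or> B \<subseteq> P"
  using prime_ss[OF P assms(2,3)] ss_sub_mul[of A B] assms HQ by auto

lemma XH_ne_H: "P \<in> XH H \<Longrightarrow> P \<noteq> H" unfolding XH_def prime_ideal_def by auto

lemma XH_eq: assumes P: "P \<in> XH H" and Q: "Q \<in> XH H" and "Q \<subseteq> P" shows "Q = P"
proof (rule ccontr)
  assume ne: "Q \<noteq> P"
  have DP: "frac_div H P" and DQ: "frac_div H Q" using XH_DF P Q by auto
  define C where "C = mul (iv P) Q"
  have DC: "frac_div H C" unfolding C_def using DF_mul DF_iv DP DQ by auto
  have "C \<subseteq> mul (iv P) P" unfolding C_def using mul_mono[OF assms(3)] mul_comm by metis
  then have CH: "C \<subseteq> H" using mul_iv[OF DP] mul_comm by metis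
  have PC: "mul P C = Q" unfolding C_def using mul_assoc[OF DP DF_iv[OF DP] DQ] mul_iv[OF DP] mul_H[OF DQ]
    by simp
  have "\<not> P \<subseteq> Q" using ne assms(3) by auto
  then have "C \<subseteq> Q" using prime_mul[OF Q XH_H[OF P] CH] PC by auto
  then have "mul P C \<subseteq> mul P Q" using mul_mono mul_comm by metis
  then have "mul H Q \<subseteq> mul P Q" using PC mul_H[OF DQ] by simp
  then have "H \<subseteq> P" using mul_cancel_sub[OF DF_H DP DQ] by auto
  then show False using XH_H[OF P] XH_ne_H[OF P] by auto
qed

end

definition supp0 :: "('b \<Rightarrow> nat) \<Rightarrow> 'b set" where "supp0 e = {Q. 0 < e Q}"

lemma idprodK: assumes "finite K" "supp0 e \<subseteq> K"
  shows "idprod e = {(\<Sum>P\<in>K. \<Sum>i<e P. x P i) | x. \<forall>P\<in>K. \<forall>i<e P. x P i \<in> P}"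
proof -
  have eq: "(\<Sum>P\<in>{Q. 0 < e Q}. \<Sum>i<e P. x P i) = (\<Sum>P\<in>K. \<Sum>i<e P. x P i)" for x :: "'a set \<Rightarrow> nat \<Rightarrow> 'a::ab_group_add"
    by (rule sum.mono_neutral_left) (use assms in \<open>auto simp: supp0_def\<close>)
  have eq2: "(\<forall>P\<in>{Q. 0 < e Q}. \<forall>i<e P. x P i \<in> P) \<longleftrightarrow> (\<forall>P\<in>K. \<forall>i<e P. x P i \<in> P)" for x :: "'a set \<Rightarrow> nat \<Rightarrow> 'a"
    using assms by (auto simp: supp0_def)
  show ?thesis unfolding idprod_def eq eq2 ..
qed

lemma sum_split_suc:
  fixes x :: "'b \<Rightarrow> nat \<Rightarrow> 'a::comm_monoid_add"
  assumes "finite K" "P \<in> K"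
  shows "(\<Sum>Q\<in>K. \<Sum>i<(e(P := Suc (e P))) Q. x Q i) = x P (e P) + (\<Sum>Q\<in>K. \<Sum>i<e Q. x Q i)"
proof -
  have "(\<Sum>Q\<in>K. \<Sum>i<(e(P := Suc (e P))) Q. x Q i) =
        (\<Sum>i<Suc (e P). x P i) + (\<Sum>Q\<in>K-{P}. \<Sum>i<(e(P := Suc (e P))) Q. x Q i)"
    using sum.remove[OF assms, of "\<lambda>Q. \<Sum>i<(e(P := Suc (e P))) Q. x Q i"] by simp
  also have "(\<Sum>Q\<in>K-{P}. \<Sum>i<(e(P := Suc (e P))) Q. x Q i) = (\<Sum>Q\<in>K-{P}. \<Sum>i<e Q. x Q i)"
    by (rule sum.cong) auto
  also have "(\<Sum>i<Suc (e P). x P i) = x P (e P) + (\<Sum>i<e P. x P i)" by (simp add: add.commute)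
  also have "(\<Sum>Q\<in>K. \<Sum>i<e Q. x Q i) = (\<Sum>i<e P. x P i) + (\<Sum>Q\<in>K-{P}. \<Sum>i<e Q. x Q i)"
    using sum.remove[OF assms, of "\<lambda>Q. \<Sum>i<e Q. x Q i"] by simp
  ultimately show ?thesis by (simp add: add.assoc)
qed

lemma idprod_0: "idprod (\<lambda>_. 0) = {0}"
  unfolding idprod_def by auto

lemma idprod_Suc: assumes fin: "finite (supp0 e)"
  shows "idprod (e(P := Suc (e P))) = setsum P (idprod e)"
proof -
  define K where "K = insert P (supp0 e)"
  have K: "finite K" "P \<in> K" using fin by (auto simp: K_def)
  have s1: "supp0 e \<subseteq> K" by (auto simp: K_def)
  have s2: "supp0 (e(P := Suc (e P))) \<subseteq> K" by (auto simp: K_def supp0_def)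
  show ?thesis
  proof (rule Set.set_eqI)
    fix z
    show "z \<in> idprod (e(P := Suc (e P))) \<longleftrightarrow> z \<in> setsum P (idprod e)"
    proof
      assume "z \<in> idprod (e(P := Suc (e P)))"
      then obtain x where x: "z = (\<Sum>Q\<in>K. \<Sum>i<(e(P := Suc (e P))) Q. x Q i)"
        "\<forall>Q\<in>K. \<forall>i<(e(P := Suc (e P))) Q. x Q i \<in> Q"
        unfolding idprodK[OF K(1) s2] by blast
      have "z = x P (e P) + (\<Sum>Q\<in>K. \<Sum>i<e Q. x Q i)" using x(1) sum_split_suc[OF K] by simp
      moreover have "x P (e P) \<in> P" using x(2) K(2) by auto
      moreover have "\<forall>Q\<in>K. \<forall>i<e Q. x Q i \<in> Q"
        using x(2) by (metis fun_upd_other fun_upd_same less_SucI)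
      then have "(\<Sum>Q\<in>K. \<Sum>i<e Q. x Q i) \<in> idprod e" unfolding idprodK[OF K(1) s1] by blast
      ultimately show "z \<in> setsum P (idprod e)" unfolding setsum_def by blast
    next
      assume "z \<in> setsum P (idprod e)"
      then obtain p x where px: "z = p + (\<Sum>Q\<in>K. \<Sum>i<e Q. x Q i)" "p \<in> P" "\<forall>Q\<in>K. \<forall>i<e Q. x Q i \<in> Q"
        unfolding setsum_def idprodK[OF K(1) s1] by blast
      define x' where "x' = x(P := (x P)(e P := p))"
      have "(\<Sum>Q\<in>K. \<Sum>i<e Q. x' Q i) = (\<Sum>Q\<in>K. \<Sum>i<e Q. x Q i)"
        by (rule sum.cong, simp, rule sum.cong) (auto simp: x'_def)
      then have "z = (\<Sum>Q\<in>K. \<Sum>i<(e(P := Suc (e P))) Q. x' Q i)"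
        using px(1) sum_split_suc[OF K, of x' e] by (simp add: x'_def)
      moreover have "\<forall>Q\<in>K. \<forall>i<(e(P := Suc (e P))) Q. x' Q i \<in> Q"
        using px(2,3) by (auto simp: x'_def less_Suc_eq)
      ultimately show "z \<in> idprod (e(P := Suc (e P)))" unfolding idprodK[OF K(1) s2] by blast
    qed
  qed
qed

context kr
begin

definition fs :: "('a set \<Rightarrow> nat) \<Rightarrow> bool" where
  "fs e \<longleftrightarrow> finite (supp0 e) \<and> supp0 e \<subseteq> XH H"

lemma fs_0: "fs (\<lambda>_. 0)" unfolding fs_def supp0_def by auto

lemma fs_Suc: "fs e \<Longrightarrow> P \<in> XH H \<Longrightarrow> fs (e(P := Suc (e P)))"
  unfolding fs_def supp0_def by (auto intro: finite_subset[of _ "insert P {Q. 0 < e Q}"])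

lemma fs_induct[consumes 1, case_names zero step]:
  assumes "fs e" "\<Phi> (\<lambda>_. 0)" "\<And>e P. fs e \<Longrightarrow> P \<in> XH H \<Longrightarrow> \<Phi> e \<Longrightarrow> \<Phi> (e(P := Suc (e P)))"
  shows "\<Phi> e"
proof -
  have "\<forall>e. fs e \<longrightarrow> sum e (supp0 e) = n \<longrightarrow> \<Phi> e" for n
  proof (induction n rule: less_induct)
    case (less n)
    show ?case
    proof (intro allI impI)
      fix e assume fe: "fs e" and n: "sum e (supp0 e) = n"
      show "\<Phi> e"
      proof (cases "supp0 e = {}")
        case True
        then have "e = (\<lambda>_. 0)" by (auto simp: supp0_def)
        then show ?thesis using assms(2) by simp
      next
        case False
        then obtain P where P: "P \<in> supp0 e" by auto
        define e0 where "e0 = e(P := e P - 1)"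
        have ee: "e = e0(P := Suc (e0 P))" using P by (auto simp: e0_def supp0_def)
        have s0: "supp0 e0 \<subseteq> supp0 e" by (auto simp: e0_def supp0_def)
        have f0: "fs e0" using fe s0 unfolding fs_def by (auto intro: finite_subset)
        have PX: "P \<in> XH H" using fe P by (auto simp: fs_def)
        have fin: "finite (supp0 e)" using fe by (auto simp: fs_def)
        have "sum e0 (supp0 e0) = sum e0 (supp0 e)"
          by (rule sum.mono_neutral_left) (use fin s0 in \<open>auto simp: supp0_def\<close>)
        also have "\<dots> < sum e (supp0 e)"
          by (rule sum_strict_mono_ex1) (use fin P in \<open>auto simp: e0_def supp0_def\<close>)
        finally have "\<Phi> e0" using less n f0 by blast
        then show ?thesis using assms(3)[OF f0 PX] ee by simp
      qed
    qed
  qed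
  then show ?thesis using assms(1) by blast
qed

lemma idprod_H: "fs e \<Longrightarrow> idprod e \<subseteq> H"
proof (induction rule: fs_induct)
  case zero show ?case unfolding idprod_0 using zeroH by simp
next
  case (step e P)
  have "idprod (e(P := Suc (e P))) = setsum P (idprod e)"
    using idprod_Suc[of e P] step(1) unfolding fs_def by simp
  moreover have "setsum P (idprod e) \<subseteq> H"
  proof
    fix z assume "z \<in> setsum P (idprod e)"
    then obtain a b where "z = a + b" "a \<in> P" "b \<in> idprod e" unfolding setsum_def by auto
    then show "z \<in> H" using XH_H[OF step(2)] step(3) addH by blast
  qed
  ultimately show ?case by (simp only:)
qed

lemma vprod_0: "vprod H (\<lambda>_. 0) = H" unfolding vprod_def idprod_0 vc_0 ..

lemma vprod_Suc: assumes "fs e" "P \<in> XH H"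
  shows "vprod H (e(P := Suc (e P))) = mul P (vprod H e)"
proof -
  have I: "idprod (e(P := Suc (e P))) = setsum P (idprod e)"
    by (rule idprod_Suc) (use assms(1) in \<open>simp add: fs_def\<close>)
  have "vprod H (e(P := Suc (e P))) = vc (setsum P (idprod e))"
    unfolding vprod_def I ..
  also have "\<dots> = mul P (vprod H e)" unfolding mul_def vprod_def
    by (rule vc_ss_vc2[symmetric]) (use XH_H[OF assms(2)] idprod_H[OF assms(1)] HQ in auto)
  finally show ?thesis .
qed

lemma vprod_DF: "fs e \<Longrightarrow> frac_div H (vprod H e) \<and> vprod H e \<subseteq> H"
proof (induction rule: fs_induct)
  case zero then show ?case using vprod_0 DF_H by auto
next
  case (step e P)
  have D: "frac_div H P" using XH_DF step(2) by auto
  have "mul P (vprod H e) \<subseteq> vprod H e" using mul_sub_right[OF D] step XH_H by blast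
  moreover have "frac_div H (mul P (vprod H e))" using DF_mul[OF D] step(3) by blast
  ultimately have "frac_div H (mul P (vprod H e)) \<and> mul P (vprod H e) \<subseteq> H" using step(3) by blast
  then show ?case using vprod_Suc[OF step(1,2)] by (simp only:)
qed

lemma fs_add: "fs e \<Longrightarrow> fs f \<Longrightarrow> fs (\<lambda>Q. e Q + f Q)"
  unfolding fs_def supp0_def
  by (auto intro: finite_subset[of _ "{Q. 0 < e Q} \<union> {Q. 0 < f Q}"])

lemma vprod_add: assumes "fs e" "fs f" shows "vprod H (\<lambda>Q. e Q + f Q) = mul (vprod H e) (vprod H f)"
  using assms(2)
proof (induction rule: fs_induct)
  case zero
  have "(\<lambda>Q. e Q + (\<lambda>_. 0::nat) Q) = e" by auto
  then show ?case using vprod_0 mul_H2 vprod_DF[OF assms(1)] by simp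
next
  case (step f P)
  have "(\<lambda>Q. e Q + (f(P := Suc (f P))) Q) = (\<lambda>Q. e Q + f Q)(P := Suc (e P + f P))" by auto
  then have "vprod H (\<lambda>Q. e Q + (f(P := Suc (f P))) Q) = mul P (vprod H (\<lambda>Q. e Q + f Q))"
    using vprod_Suc[OF fs_add[OF assms(1) step(1)] step(2)] by simp
  also have "\<dots> = mul P (mul (vprod H e) (vprod H f))" using step by simp
  also have "\<dots> = mul (vprod H e) (mul P (vprod H f))"
  proof -
    have D: "frac_div H (vprod H e)" "frac_div H (vprod H f)" "frac_div H P"
      using vprod_DF assms(1) step(1) XH_DF step(2) by auto
    have "mul P (mul (vprod H e) (vprod H f)) = mul (mul P (vprod H e)) (vprod H f)"
      using mul_assoc[OF D(3,1,2)] by simp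
    also have "\<dots> = mul (mul (vprod H e) P) (vprod H f)" using mul_comm[of P] by simp
    also have "\<dots> = mul (vprod H e) (mul P (vprod H f))" using mul_assoc[OF D(1,3,2)] by simp
    finally show ?thesis .
  qed
  also have "\<dots> = mul (vprod H e) (vprod H (f(P := Suc (f P))))" using vprod_Suc step by simp
  finally show ?case .
qed

lemma idprod_prime: assumes "fs e" "P \<in> XH H" "idprod e \<subseteq> P" shows "\<exists>Q. 0 < e Q \<and> Q \<subseteq> P"
  using assms(1,3)
proof (induction rule: fs_induct)
  case zero
  then have "0 \<in> P" using idprod_0 by auto
  then have "H \<subseteq> P" using assms(2) unfolding XH_def prime_ideal_def by force
  then show ?case using XH_ne_H[OF assms(2)] XH_H[OF assms(2)] by auto
next
  case (step e Q)
  then have "setsum Q (idprod e) \<subseteq> P" using idprod_Suc fs_def by metis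
  then have "Q \<subseteq> P \<or> idprod e \<subseteq> P" using prime_ss[OF assms(2) XH_H[OF step(2)] idprod_H[OF step(1)]] by auto
  then show ?case
  proof
    assume "Q \<subseteq> P" then show ?case by (intro exI[of _ Q]) auto
  next
    assume "idprod e \<subseteq> P"
    then obtain R where "0 < e R" "R \<subseteq> P" using step by auto
    then show ?case by (intro exI[of _ R]) auto
  qed
qed

lemma vprod_prime: assumes "fs e" "P \<in> XH H" "vprod H e \<subseteq> P" shows "0 < e P"
proof -
  have "idprod e \<subseteq> vprod H e" unfolding vprod_def
    using vc_ext idprod_H[OF assms(1)] HQ by auto
  then obtain Q where Q: "0 < e Q" "Q \<subseteq> P" using idprod_prime assms by blast
  then have "Q \<in> XH H" using assms(1) unfolding fs_def supp0_def by auto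
  then have "Q = P" using XH_eq assms(2) Q by auto
  then show ?thesis using Q by simp
qed

lemma fs_diff: "fs e \<Longrightarrow> fs (\<lambda>Q. e Q - f Q)"
  unfolding fs_def supp0_def by (auto intro: finite_subset[of _ "{Q. 0 < e Q}"])

lemma vprod_le: assumes "fs e" "fs f" "\<And>Q. f Q \<le> e Q" shows "vprod H e \<subseteq> vprod H f"
proof -
  have "e = (\<lambda>Q. f Q + (\<lambda>Q. e Q - f Q) Q)" using assms(3) by (auto simp: fun_eq_iff)
  then have "vprod H e = mul (vprod H f) (vprod H (\<lambda>Q. e Q - f Q))"
    using vprod_add assms fs_diff by metis
  also have "\<dots> = mul (vprod H (\<lambda>Q. e Q - f Q)) (vprod H f)" by (rule mul_comm)
  also have "\<dots> \<subseteq> vprod H f"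
    using mul_sub_right vprod_DF fs_diff assms(1,2) by blast
  finally show ?thesis .
qed

lemma vprod_sub_le: assumes "fs f" "fs e" "vprod H e \<subseteq> vprod H f" shows "f Q \<le> e Q"
  using assms
proof (induction arbitrary: e Q rule: fs_induct)
  case zero then show ?case by simp
next
  case (step f P e Q)
  have DP: "frac_div H P" using XH_DF step(2) .
  have S: "vprod H e \<subseteq> vprod H (f(P := Suc (f P)))" using step(5) by (simp only: fun_upd_def)
  have "vprod H e \<subseteq> mul P (vprod H f)" using S vprod_Suc[OF step(1,2)] by simp
  note sub1 = this
  also have "\<dots> \<subseteq> mul P H"
  proof -
    have "mul (vprod H f) P \<subseteq> mul H P" using mul_mono[of "vprod H f" H P] vprod_DF[OF step(1)] by blast
    then show ?thesis by (simp only: mul_comm[of _ P])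
  qed
  also have "\<dots> = P" using mul_H2 DP by simp
  finally have "0 < e P" by (rule vprod_prime[OF step(4) step(2)])
  define e0 where "e0 = e(P := e P - 1)"
  have ee: "e = e0(P := Suc (e0 P))" using \<open>0 < e P\<close> by (auto simp: e0_def)
  have "supp0 e0 \<subseteq> supp0 e" by (auto simp: e0_def supp0_def)
  then have f0: "fs e0" using step(4) unfolding fs_def by (auto intro: finite_subset[of _ "supp0 e"])
  have "vprod H e = mul P (vprod H e0)" using vprod_Suc[OF f0 step(2)] ee by (simp only:)
  then have "mul P (vprod H e0) \<subseteq> mul P (vprod H f)"
    using sub1 by (simp only:)
  then have "mul (vprod H e0) P \<subseteq> mul (vprod H f) P" by (simp only: mul_comm[of P])
  then have "vprod H e0 \<subseteq> vprod H f"
    using mul_cancel_sub[OF vprod_DF[OF f0, THEN conjunct1] vprod_DF[OF step(1), THEN conjunct1] DP]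
    by blast
  then have "f R \<le> e0 R" for R using step.IH[OF f0] by blast
  then show ?case using ee by (cases "Q = P") auto
qed

lemma vprod_inj: "fs e \<Longrightarrow> fs f \<Longrightarrow> vprod H e = vprod H f \<Longrightarrow> e = f"
proof -
  assume a: "fs e" "fs f" "vprod H e = vprod H f"
  show "e = f"
  proof
    fix Q show "e Q = f Q" using vprod_sub_le[OF a(1,2)] vprod_sub_le[OF a(2,1)] a(3)
      by (simp add: le_antisym)
  qed
qed

end

context kr
begin

definition II :: "'a set \<Rightarrow> bool" where "II A \<longleftrightarrow> frac_div H A \<and> A \<subseteq> H"

lemma wf_II: "wf {(B, A). II A \<and> II B \<and> A \<subset> B}"
proof -
  show ?thesis unfolding wf_iff_no_infinite_down_chain
  proof
    assume "\<exists>f. \<forall>i. (f (Suc i), f i) \<in> {(B, A). II A \<and> II B \<and> A \<subset> B}"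
    then obtain f where f0: "\<forall>i. (f (Suc i), f i) \<in> {(B, A). II A \<and> II B \<and> A \<subset> B}" by blast
    have f: "II (f i) \<and> II (f (Suc i)) \<and> f i \<subset> f (Suc i)" for i
      using f0 by (simp only: mem_Collect_eq case_prod_conv)
    have d: "\<forall>i. div_ideal H (f i)" using f unfolding II_def div_ideal_def frac_div_def by blast
    have m: "\<forall>i. f i \<subseteq> f (Suc i)" using f by (simp add: psubset_eq)
    have "\<exists>N. \<forall>i\<ge>N. f i = f N" using vnoeth[unfolded v_noetherian_def, rule_format, OF conjI[OF d m]] .
    then obtain N where "\<forall>i\<ge>N. f i = f N" by blast
    then have "f (Suc N) = f N" using le_SucI[OF order_refl, of N] by blast
    then show False using f[of N] by simp
  qed
qed

lemma II_H: "II H" unfolding II_def using DF_H by auto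

lemma exists_fact: "II A \<Longrightarrow> \<exists>e. fs e \<and> A = vprod H e"
proof (induction A rule: wf_induct_rule[OF wf_II])
  case (1 A)
  show ?case
  proof (cases "A = H")
    case True then show ?thesis using fs_0 vprod_0 by (intro exI[of _ "\<lambda>_. 0"]) simp
  next
    case AH: False
    define SS where "SS = {B. II B \<and> A \<subseteq> B \<and> B \<noteq> H}"
    have "A \<in> SS" using 1(2) AH by (auto simp: SS_def)
    then obtain M where M: "M \<in> SS" and Mmax: "\<And>B. (B, M) \<in> {(B, A). II A \<and> II B \<and> A \<subset> B} \<Longrightarrow> B \<notin> SS"
      by (rule wfE_min[OF wf_II]) blast+
    have MII: "II M" and AM: "A \<subseteq> M" and MH: "M \<noteq> H" using M by (auto simp: SS_def)
    have DM: "frac_div H M" and MsH: "M \<subseteq> H" using MII by (auto simp: II_def)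
    have DA: "frac_div H A" and AsH: "A \<subseteq> H" using 1(2) by (auto simp: II_def)
    have Mne: "M \<noteq> {}" using DA AM unfolding frac_div_def by auto
    have ideal: "m + h \<in> M" if "m \<in> M" "h \<in> H" for m h
    proof -
      have "m + h \<in> setsum M H" using that unfolding setsum_def by auto
      also have "\<dots> \<subseteq> mul M H" by (rule ss_sub_mul) (use MsH HQ in auto)
      also have "\<dots> = M" by (rule mul_H2[OF DM])
      finally show ?thesis .
    qed
    have primeM: "b \<in> M" if ab: "a \<in> H" "b \<in> H" "a + b \<in> M" "a \<notin> M" for a b
    proof -
      define X where "X = M \<union> tr a H"
      have XH: "X \<subseteq> H" unfolding X_def tr_def using MsH addH ab(1) by auto
      have XQ: "X \<subseteq> QG" using XH HQ by auto
      have CH: "vc X \<subseteq> H" using vc_subH[OF XH] .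
      have "a \<in> X" unfolding X_def tr_def using zeroH by (auto intro: image_eqI[of _ _ 0])
      then have aC: "a \<in> vc X" using vc_ext[OF XQ] by auto
      have MC: "M \<subseteq> vc X" using vc_ext[OF XQ] unfolding X_def by auto
      have "II (vc X)" unfolding II_def frac_div_def
        using CH vc_sub vc_idem[OF XQ] aC zeroH by (auto intro!: bexI[of _ 0])
      moreover have "M \<subset> vc X" using MC aC ab(4) by auto
      ultimately have "vc X \<notin> SS" using Mmax MII by auto
      then have CeqH: "vc X = H" using \<open>II (vc X)\<close> AM MC by (auto simp: SS_def)
      have "tr b X \<subseteq> M"
      proof
        fix z assume "z \<in> tr b X"
        then obtain y where y: "z = b + y" "y \<in> X" unfolding tr_def by auto
        show "z \<in> M"
        proof (cases "y \<in> M")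
          case True then show ?thesis using ideal[OF True ab(2)] y by (simp add: add.commute)
        next
          case False
          then obtain h where "y = a + h" "h \<in> H" using y(2) unfolding X_def tr_def by auto
          then have "z = (a + b) + h" using y by (simp add: add_ac)
          then show ?thesis using ideal[OF ab(3) \<open>h \<in> H\<close>] by simp
        qed
      qed
      then have "vc (tr b X) \<subseteq> vc M" by (rule vc_mono)
      moreover have "vc (tr b X) = tr b H" using vc_tr[of b X] HQ ab(2) CeqH by auto
      moreover have "vc M = M" using DM by (simp add: DF_vc)
      moreover have "b \<in> tr b H" unfolding tr_def using zeroH by (auto intro: image_eqI[of _ _ 0])
      ultimately show ?thesis by auto
    qed
    have MX: "M \<in> XH H"
      unfolding XH_def prime_ideal_def div_ideal_def
      using Mne MsH MH ideal primeM DF_vc[OF DM] by blast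
    define B where "B = mul (iv M) A"
    have DB: "frac_div H B" unfolding B_def using DF_mul DF_iv DM DA by auto
    have "B \<subseteq> mul (iv M) M" unfolding B_def using mul_mono[OF AM, of "iv M"] by (simp only: mul_comm[of _ "iv M"])
    also have "\<dots> = H" using mul_iv[OF DM] by (simp only: mul_comm[of M])
    finally have BH: "B \<subseteq> H" .
    have "A = mul H A" using mul_H[OF DA] by simp
    also have "\<dots> \<subseteq> B" unfolding B_def by (rule mul_mono[OF H_sub_iv[OF MsH]])
    finally have AB: "A \<subseteq> B" .
    have MB: "mul M B = A" unfolding B_def
      using mul_assoc[OF DM DF_iv[OF DM] DA] mul_iv[OF DM] mul_H[OF DA] by simp
    have "A \<noteq> B"
    proof
      assume "A = B"
      then have "mul M A = mul H A" using MB mul_H[OF DA] by simp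
      then have "M = H" using mul_cancel[OF DM DF_H DA] by blast
      then show False using MH by simp
    qed
    then have "(B, A) \<in> {(B, A). II A \<and> II B \<and> A \<subset> B}" using 1(2) DB BH AB by (auto simp: II_def)
    moreover have "II B" using DB BH by (simp add: II_def)
    ultimately obtain e where e: "fs e" "B = vprod H e" using 1(1) by blast
    have "vprod H (e(M := Suc (e M))) = A" using vprod_Suc[OF e(1) MX] e(2) MB by simp
    then show ?thesis using fs_Suc[OF e(1) MX] by blast
  qed
qed

end

context kr
begin

definition ev :: "'a \<Rightarrow> 'a set \<Rightarrow> nat" where
  "ev a = (THE e. finite {Q. 0 < e Q} \<and> {Q. 0 < e Q} \<subseteq> XH H \<and> pideal H a = vprod H e)"

lemma pideal_tr: "pideal H a = tr a H" unfolding pideal_def tr_def ..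

lemma II_tr: "a \<in> H \<Longrightarrow> II (tr a H)"
  unfolding II_def using DF_tr[OF DF_H] HQ addH by (auto simp: tr_def)

lemma ev_prop: assumes "a \<in> H" shows "fs (ev a) \<and> tr a H = vprod H (ev a)"
proof -
  obtain e where e: "fs e" "tr a H = vprod H e" using exists_fact[OF II_tr[OF assms]] by blast
  have "\<exists>!e. finite {Q. 0 < e Q} \<and> {Q. 0 < e Q} \<subseteq> XH H \<and> pideal H a = vprod H e"
  proof (rule ex1I[of _ e])
    show "finite {Q. 0 < e Q} \<and> {Q. 0 < e Q} \<subseteq> XH H \<and> pideal H a = vprod H e"
      using e unfolding fs_def supp0_def pideal_tr by blast
  next
    fix f assume "finite {Q. 0 < f Q} \<and> {Q. 0 < f Q} \<subseteq> XH H \<and> pideal H a = vprod H f"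
    then have "fs f" "vprod H f = vprod H e" using e unfolding fs_def supp0_def pideal_tr by auto
    then show "f = e" using vprod_inj e(1) by blast
  qed
  then have "finite {Q. 0 < ev a Q} \<and> {Q. 0 < ev a Q} \<subseteq> XH H \<and> pideal H a = vprod H (ev a)"
    unfolding ev_def by (rule theI')
  then show ?thesis unfolding fs_def supp0_def pideal_tr by blast
qed

lemma ev_fs: "a \<in> H \<Longrightarrow> fs (ev a)" using ev_prop by blast
lemma ev_tr: "a \<in> H \<Longrightarrow> tr a H = vprod H (ev a)" using ev_prop by blast

lemma ev_unique: "a \<in> H \<Longrightarrow> fs e \<Longrightarrow> tr a H = vprod H e \<Longrightarrow> ev a = e"
  using ev_prop vprod_inj by metis

lemma vval_ev: "a \<in> H \<Longrightarrow> vval H (pideal H a) = ev a"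
  unfolding vval_def ev_def by (rule ext) simp

lemma supp_ev: assumes "a \<in> H" shows "supp H (pideal H a) = supp0 (ev a)"
  using ev_fs[OF assms] vval_ev[OF assms] unfolding supp_def fs_def supp0_def by auto

lemma tr_add: assumes "a \<in> QG" "b \<in> QG" shows "mul (tr a H) (tr b H) = tr (a + b) H"
proof -
  have "mul (tr a H) (tr b H) = tr a (mul H (tr b H))" by (rule mul_tr[OF assms(1)])
  also have "\<dots> = tr a (tr b H)" using mul_H[OF DF_tr[OF DF_H assms(2)]] by simp
  finally show ?thesis by (simp add: tr_tr)
qed

lemma ev_add: assumes "a \<in> H" "b \<in> H" shows "ev (a + b) = (\<lambda>Q. ev a Q + ev b Q)"
proof (rule ev_unique)
  show "a + b \<in> H" using addH assms by blast
  show "fs (\<lambda>Q. ev a Q + ev b Q)" using fs_add ev_fs assms by blast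
  have "tr (a + b) H = mul (tr a H) (tr b H)" using tr_add assms HQ by auto
  also have "\<dots> = mul (vprod H (ev a)) (vprod H (ev b))" using ev_tr assms by simp
  also have "\<dots> = vprod H (\<lambda>Q. ev a Q + ev b Q)" using vprod_add ev_fs assms by simp
  finally show "tr (a + b) H = vprod H (\<lambda>Q. ev a Q + ev b Q)" .
qed

lemma ev_dvd: assumes "a \<in> H" "b \<in> H"
  shows "(\<exists>c\<in>H. b = a + c) \<longleftrightarrow> (\<forall>Q. ev a Q \<le> ev b Q)"
proof
  assume "\<exists>c\<in>H. b = a + c"
  then obtain c where "c \<in> H" "b = a + c" by blast
  then show "\<forall>Q. ev a Q \<le> ev b Q" using ev_add assms by simp
next
  assume "\<forall>Q. ev a Q \<le> ev b Q"
  then have "vprod H (ev b) \<subseteq> vprod H (ev a)" using vprod_le ev_fs assms by blast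
  then have "tr b H \<subseteq> tr a H" using ev_tr assms by simp
  moreover have "b \<in> tr b H" unfolding tr_def using zeroH by (auto intro: image_eqI[of _ _ 0])
  ultimately show "\<exists>c\<in>H. b = a + c" unfolding tr_def by auto
qed

lemma ev_unit: assumes "a \<in> H" shows "a \<in> unitsH H \<longleftrightarrow> ev a = (\<lambda>_. 0)"
proof
  assume "a \<in> unitsH H"
  then have na: "-a \<in> H" unfolding unitsH_def by auto
  have "tr a H = H"
  proof
    show "tr a H \<subseteq> H" using assms addH by (auto simp: tr_def)
    show "H \<subseteq> tr a H"
    proof
      fix h assume "h \<in> H"
      then have "-a + h \<in> H" using na addH by blast
      moreover have "h = a + (-a + h)" by simp
      ultimately show "h \<in> tr a H" unfolding tr_def by blast
    qed
  qed
  then show "ev a = (\<lambda>_. 0)" using ev_unique[OF assms fs_0] vprod_0 by simp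
next
  assume "ev a = (\<lambda>_. 0)"
  then have "tr a H = H" using ev_tr[OF assms] vprod_0 by simp
  then have "0 \<in> tr a H" using zeroH by simp
  then obtain h where "h \<in> H" "0 = a + h" unfolding tr_def by auto
  then have "h = -a" by (simp add: eq_neg_iff_add_eq_0 add.commute)
  then have "-a \<in> H" using \<open>h \<in> H\<close> by simp
  then show "a \<in> unitsH H" using assms unfolding unitsH_def by auto
qed

lemma assoc_ev: assumes "a \<in> H" "b \<in> H" shows "associated H a b \<longleftrightarrow> ev a = ev b"
proof
  assume "associated H a b"
  then obtain u where u: "u \<in> unitsH H" "b = a + u" unfolding associated_def by auto
  have uH: "u \<in> H" using u unfolding unitsH_def by auto
  show "ev a = ev b" using ev_add[OF assms(1) uH] ev_unit[OF uH] u by simp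
next
  assume eq: "ev a = ev b"
  then obtain c where c: "c \<in> H" "b = a + c" using ev_dvd assms by (metis order_refl)
  then have "ev b = (\<lambda>Q. ev a Q + ev c Q)" using ev_add assms by simp
  then have "ev c = (\<lambda>_. 0)" using eq by (auto simp: fun_eq_iff)
  then have "c \<in> unitsH H" using ev_unit c by simp
  then show "associated H a b" unfolding associated_def using c by auto
qed

lemma ev_supp_XH: "a \<in> H \<Longrightarrow> 0 < ev a Q \<Longrightarrow> Q \<in> XH H"
  using ev_fs unfolding fs_def supp0_def by auto

end

context kr
begin

abbreviation "G \<equiv> class_group H"

lemma cls_tr: "cls H A = {B. frac_div H B \<and> (\<exists>x\<in>QG. B = tr x A)}"
  unfolding cls_def tr_def ..

lemma cls_self: assumes "frac_div H A" shows "A \<in> cls H A"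
proof -
  have "A = tr 0 A" by (simp add: tr_0)
  then show ?thesis unfolding cls_tr using QG_0 assms by blast
qed

lemma cls_eq: assumes A: "frac_div H A" and B: "frac_div H B"
  shows "cls H A = cls H B \<longleftrightarrow> (\<exists>x\<in>QG. B = tr x A)"
proof
  assume "cls H A = cls H B"
  then have "B \<in> cls H A" using cls_self[OF B] by simp
  then show "\<exists>x\<in>QG. B = tr x A" unfolding cls_tr by blast
next
  assume "\<exists>x\<in>QG. B = tr x A"
  then obtain x where x: "x \<in> QG" "B = tr x A" by blast
  show "cls H A = cls H B"
  proof (rule Set.set_eqI)
    fix C
    have "(\<exists>y\<in>QG. C = tr y A) \<longleftrightarrow> (\<exists>y\<in>QG. C = tr y B)"
    proof
      assume "\<exists>y\<in>QG. C = tr y A"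
      then obtain y where y: "y \<in> QG" "C = tr y A" by blast
      have "C = tr (y - x) B" using y x by (simp add: tr_tr)
      then show "\<exists>y\<in>QG. C = tr y B" using QG_diff[OF y(1) x(1)] by blast
    next
      assume "\<exists>y\<in>QG. C = tr y B"
      then obtain y where y: "y \<in> QG" "C = tr y B" by blast
      have "C = tr (y + x) A" using y x by (simp add: tr_tr add.assoc)
      then show "\<exists>y\<in>QG. C = tr y A" using QG_add[OF y(1) x(1)] by blast
    qed
    then show "C \<in> cls H A \<longleftrightarrow> C \<in> cls H B" unfolding cls_tr by blast
  qed
qed

lemma carrier_G: "carrier G = cls H ` DF" unfolding class_group_def by simp
lemma one_G: "\<one>\<^bsub>G\<^esub> = cls H H" unfolding class_group_def by simp

lemma mult_G: assumes A: "frac_div H A" and B: "frac_div H B"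
  shows "cls H A \<otimes>\<^bsub>G\<^esub> cls H B = cls H (mul A B)"
proof -
  define A' where "A' = (SOME A'. A' \<in> cls H A)"
  define B' where "B' = (SOME B'. B' \<in> cls H B)"
  have "A' \<in> cls H A" unfolding A'_def using cls_self[OF A] by (rule someI)
  then obtain x where x: "x \<in> QG" "A' = tr x A" "frac_div H A'" unfolding cls_tr by blast
  have "B' \<in> cls H B" unfolding B'_def using cls_self[OF B] by (rule someI)
  then obtain y where y: "y \<in> QG" "B' = tr y B" "frac_div H B'" unfolding cls_tr by blast
  have "cls H A \<otimes>\<^bsub>G\<^esub> cls H B = cls H (mul A' B')"
    unfolding class_group_def A'_def B'_def mul_def by simp
  also have "mul A' B' = tr (x + y) (mul A B)"
  proof -
    have "mul A' B' = tr x (mul A (tr y B))" using x(2) y(2) mul_tr[OF x(1)] by simp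
    also have "mul A (tr y B) = tr y (mul A B)"
    proof -
      have "mul A (tr y B) = mul (tr y B) A" by (rule mul_comm)
      also have "\<dots> = tr y (mul B A)" by (rule mul_tr[OF y(1)])
      finally show ?thesis by (simp only: mul_comm[of B])
    qed
    finally show ?thesis by (simp add: tr_tr)
  qed
  also have "cls H (tr (x + y) (mul A B)) = cls H (mul A B)"
    using cls_eq[OF DF_mul[OF A B] DF_tr[OF DF_mul[OF A B] QG_add[OF x(1) y(1)]]] QG_add[OF x(1) y(1)]
    by blast
  finally show ?thesis .
qed

lemma G_comm_group: "comm_group G"
proof (rule comm_groupI)
  fix x y assume "x \<in> carrier G" "y \<in> carrier G"
  then obtain A B where "frac_div H A" "frac_div H B" "x = cls H A" "y = cls H B"
    unfolding carrier_G by blast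
  then show "x \<otimes>\<^bsub>G\<^esub> y \<in> carrier G" using mult_G DF_mul unfolding carrier_G by auto
next
  show "\<one>\<^bsub>G\<^esub> \<in> carrier G" unfolding one_G carrier_G using DF_H by auto
next
  fix x y z assume "x \<in> carrier G" "y \<in> carrier G" "z \<in> carrier G"
  then obtain A B C where D: "frac_div H A" "frac_div H B" "frac_div H C"
    and xyz: "x = cls H A" "y = cls H B" "z = cls H C"
    unfolding carrier_G by blast
  show "x \<otimes>\<^bsub>G\<^esub> y \<otimes>\<^bsub>G\<^esub> z = x \<otimes>\<^bsub>G\<^esub> (y \<otimes>\<^bsub>G\<^esub> z)"
    unfolding xyz mult_G[OF D(1,2)] mult_G[OF D(2,3)] mult_G[OF DF_mul[OF D(1,2)] D(3)]
      mult_G[OF D(1) DF_mul[OF D(2,3)]] mul_assoc[OF D] ..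
next
  fix x y assume "x \<in> carrier G" "y \<in> carrier G"
  then obtain A B where D: "frac_div H A" "frac_div H B" and xy: "x = cls H A" "y = cls H B"
    unfolding carrier_G by blast
  show "x \<otimes>\<^bsub>G\<^esub> y = y \<otimes>\<^bsub>G\<^esub> x" unfolding xy mult_G[OF D] mult_G[OF D(2,1)] mul_comm[of A] ..
next
  fix x assume "x \<in> carrier G"
  then obtain A where D: "frac_div H A" and x: "x = cls H A" unfolding carrier_G by blast
  show "\<one>\<^bsub>G\<^esub> \<otimes>\<^bsub>G\<^esub> x = x" unfolding x one_G mult_G[OF DF_H D] mul_H[OF D] ..
next
  fix x assume "x \<in> carrier G"
  then obtain A where D: "frac_div H A" and x: "x = cls H A" unfolding carrier_G by blast
  have "cls H (iv A) \<otimes>\<^bsub>G\<^esub> x = \<one>\<^bsub>G\<^esub>"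
    unfolding x one_G mult_G[OF DF_iv[OF D] D] using mul_iv[OF D] by (simp only: mul_comm[of "iv A"])
  moreover have "cls H (iv A) \<in> carrier G" unfolding carrier_G using DF_iv[OF D] by auto
  ultimately show "\<exists>y\<in>carrier G. y \<otimes>\<^bsub>G\<^esub> x = \<one>\<^bsub>G\<^esub>" by blast
qed

sublocale CG: comm_group G by (rule G_comm_group)

lemma cls_carrier: "frac_div H A \<Longrightarrow> cls H A \<in> carrier G" unfolding carrier_G by auto

definition dl :: "'a set \<Rightarrow> nat \<Rightarrow> 'a set \<Rightarrow> nat" where
  "dl P n = (\<lambda>Q. if Q = P then n else 0)"

lemma fs_dl: "P \<in> XH H \<Longrightarrow> fs (dl P n)" unfolding fs_def supp0_def dl_def by auto

lemma pow_cls: assumes P: "P \<in> XH H" shows "cls H P [^]\<^bsub>G\<^esub> n = cls H (vprod H (dl P n))"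
proof (induction n)
  case 0
  have "dl P 0 = (\<lambda>_. 0)" by (auto simp: dl_def)
  then show ?case using one_G vprod_0 by simp
next
  case (Suc n)
  have "cls H P [^]\<^bsub>G\<^esub> Suc n = cls H P [^]\<^bsub>G\<^esub> n \<otimes>\<^bsub>G\<^esub> cls H P" by simp
  also have "\<dots> = cls H (mul (vprod H (dl P n)) P)"
    using Suc mult_G vprod_DF[OF fs_dl[OF P]] XH_DF[OF P] by simp
  also have "mul (vprod H (dl P n)) P = vprod H (dl P (Suc n))"
  proof -
    have "dl P (Suc n) = (dl P n)(P := Suc (dl P n P))" by (auto simp: dl_def)
    then have "vprod H (dl P (Suc n)) = mul P (vprod H (dl P n))" using vprod_Suc[OF fs_dl[OF P] P] by simp
    then show ?thesis by (simp only: mul_comm[of P])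
  qed
  finally show ?case .
qed

definition rs :: "('a set \<Rightarrow> nat) \<Rightarrow> 'a set set \<Rightarrow> 'a set \<Rightarrow> nat" where
  "rs \<alpha> T = (\<lambda>Q. if Q \<in> T then \<alpha> Q else 0)"

lemma fs_rs: "finite T \<Longrightarrow> T \<subseteq> XH H \<Longrightarrow> fs (rs \<alpha> T)"
  unfolding fs_def supp0_def rs_def by (auto intro: finite_subset[of _ T])

lemma finprod_cls: assumes "finite T" "T \<subseteq> XH H"
  shows "finprod G (\<lambda>p. cls H p [^]\<^bsub>G\<^esub> \<alpha> p) T = cls H (vprod H (rs \<alpha> T))"
  using assms
proof (induction T rule: finite_induct)
  case empty
  have "rs \<alpha> {} = (\<lambda>_. 0)" by (auto simp: rs_def)
  then show ?case using one_G vprod_0 by simp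
next
  case (insert P T)
  have P: "P \<in> XH H" and T: "T \<subseteq> XH H" using insert by auto
  have f: "(\<lambda>p. cls H p [^]\<^bsub>G\<^esub> \<alpha> p) \<in> T \<rightarrow> carrier G" using T XH_DF cls_carrier by auto
  have "finprod G (\<lambda>p. cls H p [^]\<^bsub>G\<^esub> \<alpha> p) (insert P T)
      = cls H P [^]\<^bsub>G\<^esub> \<alpha> P \<otimes>\<^bsub>G\<^esub> finprod G (\<lambda>p. cls H p [^]\<^bsub>G\<^esub> \<alpha> p) T"
    using CG.finprod_insert[OF insert(1,2) f] cls_carrier[OF XH_DF[OF P]] by simp
  also have "\<dots> = cls H (mul (vprod H (dl P (\<alpha> P))) (vprod H (rs \<alpha> T)))"
    using insert(3)[OF T] pow_cls[OF P] mult_G vprod_DF fs_dl[OF P] fs_rs[OF insert(1) T] by simp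
  also have "mul (vprod H (dl P (\<alpha> P))) (vprod H (rs \<alpha> T)) = vprod H (rs \<alpha> (insert P T))"
  proof -
    have "rs \<alpha> (insert P T) = (\<lambda>Q. dl P (\<alpha> P) Q + rs \<alpha> T Q)"
      using insert(2) by (auto simp: rs_def dl_def)
    then show ?thesis using vprod_add[OF fs_dl[OF P] fs_rs[OF insert(1) T]] by simp
  qed
  finally show ?case .
qed

lemma cls_one_iff: assumes "fs e" shows "cls H (vprod H e) = \<one>\<^bsub>G\<^esub> \<longleftrightarrow> (\<exists>a\<in>H. ev a = e)"
proof
  assume "cls H (vprod H e) = \<one>\<^bsub>G\<^esub>"
  then have "cls H H = cls H (vprod H e)" using one_G by simp
  then obtain x where x: "x \<in> QG" "vprod H e = tr x H" using cls_eq[OF DF_H] vprod_DF[OF assms] by blast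
  have "x \<in> tr x H" unfolding tr_def using zeroH by (auto intro: image_eqI[of _ _ 0])
  then have xH: "x \<in> H" using x vprod_DF[OF assms] by auto
  then have "ev x = e" using ev_unique[OF xH assms] x by simp
  then show "\<exists>a\<in>H. ev a = e" using xH by blast
next
  assume "\<exists>a\<in>H. ev a = e"
  then obtain a where a: "a \<in> H" "ev a = e" by blast
  then have "vprod H e = tr a H" using ev_tr by simp
  moreover have "a \<in> QG" using a(1) HQ by blast
  ultimately have "cls H H = cls H (vprod H e)" using cls_eq[OF DF_H] vprod_DF[OF assms] by blast
  then show "cls H (vprod H e) = \<one>\<^bsub>G\<^esub>" unfolding one_G by simp
qed

end

context kr
begin

definition Ph :: "('a set \<Rightarrow> nat) \<Rightarrow> 'a set set" where "Ph e = cls H (vprod H e)"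

lemma Ph_carrier: "fs e \<Longrightarrow> Ph e \<in> carrier G"
  unfolding Ph_def using cls_carrier vprod_DF by blast

lemma Ph_0: "Ph (\<lambda>_. 0) = \<one>\<^bsub>G\<^esub>" unfolding Ph_def vprod_0 one_G ..

lemma Ph_add: "fs e \<Longrightarrow> fs f \<Longrightarrow> Ph (\<lambda>Q. e Q + f Q) = Ph e \<otimes>\<^bsub>G\<^esub> Ph f"
  unfolding Ph_def using vprod_add mult_G vprod_DF by simp

lemma fs_smult: "fs e \<Longrightarrow> fs (\<lambda>Q. k * e Q)" unfolding fs_def supp0_def by auto

lemma Ph_smult: assumes "fs e" shows "Ph (\<lambda>Q. k * e Q) = Ph e [^]\<^bsub>G\<^esub> k"
proof (induction k)
  case 0 then show ?case using Ph_0 by simp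
next
  case (Suc k)
  have "Ph (\<lambda>Q. Suc k * e Q) = Ph (\<lambda>Q. k * e Q + e Q)" by (simp add: add.commute)
  also have "\<dots> = Ph (\<lambda>Q. k * e Q) \<otimes>\<^bsub>G\<^esub> Ph e" using Ph_add fs_smult assms by simp
  finally show ?case using Suc by simp
qed

lemma Ph_one_iff: "fs e \<Longrightarrow> Ph e = \<one>\<^bsub>G\<^esub> \<longleftrightarrow> (\<exists>a\<in>H. ev a = e)"
  unfolding Ph_def by (rule cls_one_iff)

lemma Ph_ev: "a \<in> H \<Longrightarrow> Ph (ev a) = \<one>\<^bsub>G\<^esub>" using Ph_one_iff ev_fs by blast

definition vsize :: "('a set \<Rightarrow> nat) \<Rightarrow> nat" where "vsize e = sum e (supp0 e)"

lemma vsize_less: assumes "fs e" "fs f" "f \<noteq> (\<lambda>_. 0)" shows "vsize e < vsize (\<lambda>Q. e Q + f Q)"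
proof -
  let ?g = "\<lambda>Q. e Q + f Q"
  have fin: "finite (supp0 ?g)" using fs_add[OF assms(1,2)] unfolding fs_def by auto
  have "vsize e = sum e (supp0 ?g)"
    unfolding vsize_def by (rule sum.mono_neutral_left) (use fin in \<open>auto simp: supp0_def\<close>)
  also have "\<dots> < sum ?g (supp0 ?g)"
  proof (rule sum_strict_mono_ex1[OF fin])
    show "\<forall>x\<in>supp0 ?g. e x \<le> e x + f x" by simp
    from assms(3) obtain Q where "f Q \<noteq> 0" by auto
    then show "\<exists>x\<in>supp0 ?g. e x < e x + f x" by (intro bexI[of _ Q]) (auto simp: supp0_def)
  qed
  finally show ?thesis unfolding vsize_def .
qed

lemma unitsH_H: "x \<in> unitsH H \<Longrightarrow> x \<in> H" unfolding unitsH_def by auto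

lemma nonunit_ev: "a \<in> H \<Longrightarrow> a \<notin> unitsH H \<Longrightarrow> ev a \<noteq> (\<lambda>_. 0)" using ev_unit by blast

lemma factor: "b \<in> H \<Longrightarrow> b \<notin> unitsH H \<Longrightarrow> \<exists>xs. xs \<noteq> [] \<and> (\<forall>x\<in>set xs. irred H x) \<and> sum_list xs = b"
proof (induction "vsize (ev b)" arbitrary: b rule: less_induct)
  case less
  show ?case
  proof (cases "irred H b")
    case True then show ?thesis by (intro exI[of _ "[b]"]) simp
  next
    case False
    then obtain y z where yz: "y \<in> H" "z \<in> H" "b = y + z" "y \<notin> unitsH H" "z \<notin> unitsH H"
      using less.prems unfolding irred_def by blast
    have ev: "ev b = (\<lambda>Q. ev y Q + ev z Q)" using ev_add yz by simp
    have "vsize (ev y) < vsize (ev b)" unfolding ev by (rule vsize_less) (use ev_fs yz nonunit_ev in auto)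
    then obtain xs where xs: "xs \<noteq> []" "\<forall>x\<in>set xs. irred H x" "sum_list xs = y" using less yz by blast
    have ev2: "ev b = (\<lambda>Q. ev z Q + ev y Q)" using ev by (auto simp: add.commute)
    have "vsize (ev z) < vsize (ev b)" unfolding ev2 by (rule vsize_less) (use ev_fs yz nonunit_ev in auto)
    then obtain ys where ys: "ys \<noteq> []" "\<forall>x\<in>set ys. irred H x" "sum_list ys = z" using less yz by blast
    show ?thesis using xs ys yz by (intro exI[of _ "xs @ ys"]) auto
  qed
qed

lemma irred_H: "irred H x \<Longrightarrow> x \<in> H" unfolding irred_def by auto
lemma irred_nonunit: "irred H x \<Longrightarrow> x \<notin> unitsH H" unfolding irred_def by auto

lemma sum_list_H: "\<forall>x\<in>set xs. x \<in> H \<Longrightarrow> sum_list xs \<in> H"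
  by (induction xs) (auto simp: zeroH addH)

lemma ev_0: "ev 0 = (\<lambda>_. 0)"
proof -
  have "0 \<in> unitsH H" unfolding unitsH_def using zeroH by simp
  then show ?thesis using ev_unit zeroH by blast
qed

lemma ev_sum_list: "\<forall>x\<in>set xs. x \<in> H \<Longrightarrow> ev (sum_list xs) = (\<lambda>Q. \<Sum>x\<leftarrow>xs. ev x Q)"
proof (induction xs)
  case Nil
  show ?case using ev_0 by simp
next
  case (Cons x xs) then show ?case using ev_add sum_list_H by simp
qed

lemma nmul_H: "x \<in> H \<Longrightarrow> nmul n x \<in> H" by (induction n) (auto simp: nmul_0 nmul_Suc zeroH addH)

lemma ev_nmul: "x \<in> H \<Longrightarrow> ev (nmul n x) = (\<lambda>Q. n * ev x Q)"
proof (induction n)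
  case 0
  show ?case using ev_0 by (simp add: nmul_0)
next
  case (Suc n) then show ?case using ev_add nmul_H by (simp add: nmul_Suc)
qed

lemma atom: assumes "b \<in> H" "b \<notin> unitsH H" shows "\<exists>u. irred H u \<and> (\<forall>Q. ev u Q \<le> ev b Q)"
proof -
  obtain xs where xs: "xs \<noteq> []" "\<forall>x\<in>set xs. irred H x" "sum_list xs = b" using factor assms by blast
  then obtain x xs0 where x: "xs = x # xs0" by (cases xs) auto
  have "ev b = (\<lambda>Q. \<Sum>x\<leftarrow>xs. ev x Q)" using ev_sum_list xs irred_H by metis
  then have "\<forall>Q. ev x Q \<le> ev b Q" using x by simp
  then show ?thesis using xs x by auto
qed

lemma irred_unit: assumes "irred H x" "c \<in> unitsH H" shows "irred H (x + c)"
proof -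
  have xH: "x \<in> H" and cH: "c \<in> H" "-c \<in> H" using assms unfolding irred_def unitsH_def by auto
  have "ev (x + c) = ev x" using ev_add[OF xH cH(1)] ev_unit[OF cH(1)] assms(2) by simp
  moreover have "x \<notin> unitsH H" using assms by (simp add: irred_def)
  ultimately have nu: "x + c \<notin> unitsH H" using ev_unit xH addH[OF xH cH(1)] by metis
  have "y \<in> unitsH H \<or> z \<in> unitsH H" if "y \<in> H" "z \<in> H" "x + c = y + z" for y z
  proof -
    have "x = y + (z + -c)" using that(3) by (simp add: algebra_simps)
    moreover have "z + -c \<in> H" using addH that(2) cH(2) by blast
    ultimately have "y \<in> unitsH H \<or> z + -c \<in> unitsH H" using assms(1) that(1) unfolding irred_def by blast
    moreover have "z \<in> unitsH H" if "z + -c \<in> unitsH H"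
    proof -
      have "-(z + -c) \<in> H" using that unfolding unitsH_def by auto
      then have "-(z + -c) + -c \<in> H" using addH cH(2) by blast
      moreover have "-(z + -c) + -c = -z" by simp
      ultimately show ?thesis using \<open>z \<in> H\<close> unfolding unitsH_def by auto
    qed
    ultimately show ?thesis by blast
  qed
  then show ?thesis using nu addH[OF xH cH(1)] unfolding irred_def by blast
qed

end

context kr
begin

lemma Gcancel: "x \<in> carrier G \<Longrightarrow> y \<in> carrier G \<Longrightarrow> z \<in> carrier G \<Longrightarrow> x \<otimes>\<^bsub>G\<^esub> y = x \<otimes>\<^bsub>G\<^esub> z \<Longrightarrow> y = z"
  using CG.Units_l_cancel CG.Units_eq by blast

lemma Gcancel_r: "x \<in> carrier G \<Longrightarrow> y \<in> carrier G \<Longrightarrow> z \<in> carrier G \<Longrightarrow> y \<otimes>\<^bsub>G\<^esub> x = z \<otimes>\<^bsub>G\<^esub> x \<Longrightarrow> y = z"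
  using Gcancel CG.m_comm by metis

lemma finprod_inv: assumes "finite T" "f \<in> T \<rightarrow> carrier G"
  shows "finprod G (\<lambda>p. inv\<^bsub>G\<^esub> (f p)) T = inv\<^bsub>G\<^esub> (finprod G f T)"
  using assms
proof (induction T rule: finite_induct)
  case empty then show ?case by simp
next
  case (insert x T)
  have f: "f \<in> T \<rightarrow> carrier G" "f x \<in> carrier G" using insert by auto
  have fi: "(\<lambda>p. inv\<^bsub>G\<^esub> (f p)) \<in> T \<rightarrow> carrier G" using f by auto
  have "finprod G (\<lambda>p. inv\<^bsub>G\<^esub> (f p)) (insert x T) = inv\<^bsub>G\<^esub> (f x) \<otimes>\<^bsub>G\<^esub> finprod G (\<lambda>p. inv\<^bsub>G\<^esub> (f p)) T"
    using CG.finprod_insert[OF insert(1,2) fi] f by simp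
  also have "\<dots> = inv\<^bsub>G\<^esub> (f x) \<otimes>\<^bsub>G\<^esub> inv\<^bsub>G\<^esub> (finprod G f T)" using insert f by simp
  also have "\<dots> = inv\<^bsub>G\<^esub> (f x \<otimes>\<^bsub>G\<^esub> finprod G f T)" using CG.inv_mult f by simp
  also have "f x \<otimes>\<^bsub>G\<^esub> finprod G f T = finprod G f (insert x T)"
    using CG.finprod_insert[OF insert(1,2) f(1)] f by simp
  finally show ?case .
qed

lemma pow_split: assumes "x \<in> carrier G"
  shows "x [^]\<^bsub>G\<^esub> (b::int) = x [^]\<^bsub>G\<^esub> nat b \<otimes>\<^bsub>G\<^esub> inv\<^bsub>G\<^esub> (x [^]\<^bsub>G\<^esub> nat (-b))"
proof (cases "b < 0")
  case True
  then have "nat b = 0" by simp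
  then have "x [^]\<^bsub>G\<^esub> nat b \<otimes>\<^bsub>G\<^esub> inv\<^bsub>G\<^esub> (x [^]\<^bsub>G\<^esub> nat (-b)) = inv\<^bsub>G\<^esub> (x [^]\<^bsub>G\<^esub> nat (-b))"
    using assms by simp
  moreover have "x [^]\<^bsub>G\<^esub> b = inv\<^bsub>G\<^esub> (x [^]\<^bsub>G\<^esub> nat (-b))" using True by (simp only: int_pow_def2 if_True)
  ultimately show ?thesis by simp
next
  case False
  then have "nat (-b) = 0" by simp
  then have "x [^]\<^bsub>G\<^esub> nat b \<otimes>\<^bsub>G\<^esub> inv\<^bsub>G\<^esub> (x [^]\<^bsub>G\<^esub> nat (-b)) = x [^]\<^bsub>G\<^esub> nat b"
    using assms by simp
  moreover have "x [^]\<^bsub>G\<^esub> b = x [^]\<^bsub>G\<^esub> nat b" using False by (simp only: int_pow_def2 if_False)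
  ultimately show ?thesis by simp
qed

lemma finprod_int: assumes "finite T" "T \<subseteq> XH H"
  shows "finprod G (\<lambda>p. cls H p [^]\<^bsub>G\<^esub> (b p :: int)) T
       = Ph (rs (\<lambda>p. nat (b p)) T) \<otimes>\<^bsub>G\<^esub> inv\<^bsub>G\<^esub> (Ph (rs (\<lambda>p. nat (- b p)) T))"
proof -
  have c: "cls H p \<in> carrier G" if "p \<in> T" for p using cls_carrier XH_DF assms(2) that by blast
  have "finprod G (\<lambda>p. cls H p [^]\<^bsub>G\<^esub> (b p :: int)) T
      = finprod G (\<lambda>p. cls H p [^]\<^bsub>G\<^esub> nat (b p) \<otimes>\<^bsub>G\<^esub> inv\<^bsub>G\<^esub> (cls H p [^]\<^bsub>G\<^esub> nat (- b p))) T"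
  proof (rule CG.finprod_cong'[OF refl])
    show "(\<lambda>p. cls H p [^]\<^bsub>G\<^esub> nat (b p) \<otimes>\<^bsub>G\<^esub> inv\<^bsub>G\<^esub> (cls H p [^]\<^bsub>G\<^esub> nat (- b p))) \<in> T \<rightarrow> carrier G"
      using c by (intro Pi_I) (simp add: CG.m_closed)
    show "cls H i [^]\<^bsub>G\<^esub> b i = cls H i [^]\<^bsub>G\<^esub> nat (b i) \<otimes>\<^bsub>G\<^esub> inv\<^bsub>G\<^esub> (cls H i [^]\<^bsub>G\<^esub> nat (- b i))"
      if "i \<in> T" for i using pow_split[OF c[OF that]] .
  qed
  also have "\<dots> = finprod G (\<lambda>p. cls H p [^]\<^bsub>G\<^esub> nat (b p)) T \<otimes>\<^bsub>G\<^esub>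
                  finprod G (\<lambda>p. inv\<^bsub>G\<^esub> (cls H p [^]\<^bsub>G\<^esub> nat (- b p))) T"
    by (rule CG.finprod_multf) (use c in auto)
  also have "finprod G (\<lambda>p. inv\<^bsub>G\<^esub> (cls H p [^]\<^bsub>G\<^esub> nat (- b p))) T
           = inv\<^bsub>G\<^esub> (finprod G (\<lambda>p. cls H p [^]\<^bsub>G\<^esub> nat (- b p)) T)"
    by (rule finprod_inv[OF assms(1)]) (use c in auto)
  finally show ?thesis unfolding Ph_def finprod_cls[OF assms] .
qed

end

lemma nat_int_diff: "nat (int a - int b) = a - b" by simp
lemma nat_int_diff2: "nat (- (int a - int b)) = b - a" by simp

definition supin :: "('b \<Rightarrow> nat) \<Rightarrow> 'b set \<Rightarrow> bool" where "supin e T \<longleftrightarrow> (\<forall>Q. Q \<notin> T \<longrightarrow> e Q = 0)"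

locale kS = kr +
  fixes S :: "'a set set"
  assumes finS: "finite S" and neS: "S \<noteq> {}" and SX: "S \<subseteq> XH H"
begin

lemma supin_fs: assumes "supin e T" "T \<subseteq> S" shows "fs e"
proof -
  have "supp0 e \<subseteq> S" using assms unfolding supin_def supp0_def by force
  then show ?thesis unfolding fs_def using finS SX finite_subset by blast
qed

lemma rs_supin: "supin (rs \<alpha> T) T" unfolding supin_def rs_def by auto

lemma rs_id: "supin e T \<Longrightarrow> rs e T = e" unfolding supin_def rs_def by auto

lemma finT: "T \<subseteq> S \<Longrightarrow> finite T" using finS finite_subset by blast
lemma TX: "T \<subseteq> S \<Longrightarrow> T \<subseteq> XH H" using SX by blast

lemma DN_iff: assumes T: "T \<subseteq> S"
  shows "(\<exists>\<alpha>::'a set \<Rightarrow> nat. (\<exists>p\<in>T. \<alpha> p \<noteq> 0) \<and> finprod G (\<lambda>p. cls H p [^]\<^bsub>G\<^esub> \<alpha> p) T = \<one>\<^bsub>G\<^esub>)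
     \<longleftrightarrow> (\<exists>e. supin e T \<and> e \<noteq> (\<lambda>_. 0) \<and> Ph e = \<one>\<^bsub>G\<^esub>)"
proof
  assume "\<exists>\<alpha>::'a set \<Rightarrow> nat. (\<exists>p\<in>T. \<alpha> p \<noteq> 0) \<and> finprod G (\<lambda>p. cls H p [^]\<^bsub>G\<^esub> \<alpha> p) T = \<one>\<^bsub>G\<^esub>"
  then obtain \<alpha> :: "'a set \<Rightarrow> nat" and p where a: "p \<in> T" "\<alpha> p \<noteq> 0"
    "finprod G (\<lambda>p. cls H p [^]\<^bsub>G\<^esub> \<alpha> p) T = \<one>\<^bsub>G\<^esub>" by blast
  have "Ph (rs \<alpha> T) = \<one>\<^bsub>G\<^esub>" using a(3) finprod_cls[OF finT[OF T] TX[OF T]] unfolding Ph_def by simp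
  moreover have "rs \<alpha> T \<noteq> (\<lambda>_. 0)"
  proof
    assume "rs \<alpha> T = (\<lambda>_. 0)"
    then have "rs \<alpha> T p = 0" by simp
    then show False using a(1,2) unfolding rs_def by simp
  qed
  ultimately show "\<exists>e. supin e T \<and> e \<noteq> (\<lambda>_. 0) \<and> Ph e = \<one>\<^bsub>G\<^esub>" using rs_supin by blast
next
  assume "\<exists>e. supin e T \<and> e \<noteq> (\<lambda>_. 0) \<and> Ph e = \<one>\<^bsub>G\<^esub>"
  then obtain e where e: "supin e T" "e \<noteq> (\<lambda>_. 0)" "Ph e = \<one>\<^bsub>G\<^esub>" by blast
  have "\<exists>p. e p \<noteq> 0"
  proof (rule ccontr)
    assume "\<not> (\<exists>p. e p \<noteq> 0)"
    then have "e = (\<lambda>_. 0)" by (intro ext) simp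
    then show False using e(2) by simp
  qed
  then obtain p where p: "e p \<noteq> 0" by blast
  have pT: "p \<in> T" by (rule ccontr) (use e(1) p in \<open>simp add: supin_def\<close>)
  have fp: "finprod G (\<lambda>p. cls H p [^]\<^bsub>G\<^esub> e p) T = \<one>\<^bsub>G\<^esub>"
    using e(3) unfolding finprod_cls[OF finT[OF T] TX[OF T]] rs_id[OF e(1)] Ph_def .
  show "\<exists>\<alpha>::'a set \<Rightarrow> nat. (\<exists>p\<in>T. \<alpha> p \<noteq> 0) \<and> finprod G (\<lambda>p. cls H p [^]\<^bsub>G\<^esub> \<alpha> p) T = \<one>\<^bsub>G\<^esub>"
    by (intro exI[of _ e] conjI bexI[of _ p] pT p fp)
qed

lemma Ph_minus: assumes "supin u T" "supin w T" "T \<subseteq> S"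
  shows "Ph (\<lambda>Q. u Q - w Q) = Ph (\<lambda>Q. w Q - u Q) \<longleftrightarrow> Ph u = Ph w"
proof -
  define m where "m = (\<lambda>Q. min (u Q) (w Q))"
  have sm: "supin m T" "supin (\<lambda>Q. u Q - w Q) T" "supin (\<lambda>Q. w Q - u Q) T"
    using assms(1,2) unfolding m_def supin_def by simp_all
  have fm: "fs m" "fs (\<lambda>Q. u Q - w Q)" "fs (\<lambda>Q. w Q - u Q)" using supin_fs[OF _ assms(3)] sm by blast+
  have e1: "u = (\<lambda>Q. m Q + (u Q - w Q))" and e2: "w = (\<lambda>Q. m Q + (w Q - u Q))" unfolding m_def by auto
  have p1: "Ph u = Ph m \<otimes>\<^bsub>G\<^esub> Ph (\<lambda>Q. u Q - w Q)"
    using Ph_add[OF fm(1) fm(2)] e1 by simp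
  have p2: "Ph w = Ph m \<otimes>\<^bsub>G\<^esub> Ph (\<lambda>Q. w Q - u Q)"
    using Ph_add[OF fm(1) fm(3)] e2 by simp
  show ?thesis
  proof
    assume "Ph (\<lambda>Q. u Q - w Q) = Ph (\<lambda>Q. w Q - u Q)"
    then show "Ph u = Ph w" using p1 p2 by simp
  next
    assume "Ph u = Ph w"
    then have "Ph m \<otimes>\<^bsub>G\<^esub> Ph (\<lambda>Q. u Q - w Q) = Ph m \<otimes>\<^bsub>G\<^esub> Ph (\<lambda>Q. w Q - u Q)" using p1 p2 by simp
    then show "Ph (\<lambda>Q. u Q - w Q) = Ph (\<lambda>Q. w Q - u Q)"
      by (rule Gcancel[OF Ph_carrier[OF fm(1)] Ph_carrier[OF fm(2)] Ph_carrier[OF fm(3)]])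
  qed
qed

lemma DZ_iff: assumes T: "T \<subseteq> S"
  shows "(\<exists>\<alpha>::'a set \<Rightarrow> int. (\<exists>p\<in>T. \<alpha> p \<noteq> 0) \<and> finprod G (\<lambda>p. cls H p [^]\<^bsub>G\<^esub> \<alpha> p) T = \<one>\<^bsub>G\<^esub>)
     \<longleftrightarrow> (\<exists>u w. supin u T \<and> supin w T \<and> u \<noteq> w \<and> Ph u = Ph w)"
proof
  assume "\<exists>\<alpha>::'a set \<Rightarrow> int. (\<exists>p\<in>T. \<alpha> p \<noteq> 0) \<and> finprod G (\<lambda>p. cls H p [^]\<^bsub>G\<^esub> \<alpha> p) T = \<one>\<^bsub>G\<^esub>"
  then obtain \<alpha> :: "'a set \<Rightarrow> int" and p where a: "p \<in> T" "\<alpha> p \<noteq> 0"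
    "finprod G (\<lambda>p. cls H p [^]\<^bsub>G\<^esub> \<alpha> p) T = \<one>\<^bsub>G\<^esub>" by blast
  define u where "u = rs (\<lambda>p. nat (\<alpha> p)) T"
  define w where "w = rs (\<lambda>p. nat (- \<alpha> p)) T"
  have su: "supin u T" "supin w T" unfolding u_def w_def by (rule rs_supin)+
  have "Ph u \<otimes>\<^bsub>G\<^esub> inv\<^bsub>G\<^esub> (Ph w) = \<one>\<^bsub>G\<^esub>"
    using a(3) finprod_int[OF finT[OF T] TX[OF T]] unfolding u_def w_def by simp
  moreover have cu: "Ph u \<in> carrier G" "Ph w \<in> carrier G" using Ph_carrier supin_fs[OF _ T] su by blast+
  ultimately have "Ph u = \<one>\<^bsub>G\<^esub> \<otimes>\<^bsub>G\<^esub> Ph w" using CG.inv_solve_right'[OF CG.one_closed cu(1) cu(2)] by blast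
  then have "Ph u = Ph w" using cu(2) by simp
  moreover have "u \<noteq> w"
  proof
    assume "u = w"
    then have "u p = w p" by simp
    then have "nat (\<alpha> p) = nat (- \<alpha> p)" using a(1) unfolding u_def w_def rs_def by simp
    then show False using a(2) by simp
  qed
  ultimately show "\<exists>u w. supin u T \<and> supin w T \<and> u \<noteq> w \<and> Ph u = Ph w" using su by blast
next
  assume "\<exists>u w. supin u T \<and> supin w T \<and> u \<noteq> w \<and> Ph u = Ph w"
  then obtain u w where uw: "supin u T" "supin w T" "u \<noteq> w" "Ph u = Ph w" by blast
  define \<alpha> where "\<alpha> = (\<lambda>p. int (u p) - int (w p))"
  have "\<exists>p. u p \<noteq> w p"
  proof (rule ccontr)
    assume "\<not> (\<exists>p. u p \<noteq> w p)"
    then have "u = w" by (intro ext) simp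
    then show False using uw(3) by simp
  qed
  then obtain p where p: "u p \<noteq> w p" by blast
  have pT: "p \<in> T" by (rule ccontr) (use uw(1,2) p in \<open>simp add: supin_def\<close>)
  have r1: "rs (\<lambda>p. nat (\<alpha> p)) T = (\<lambda>Q. u Q - w Q)"
    using uw(1,2) unfolding rs_def \<alpha>_def supin_def by (intro ext) (simp add: nat_int_diff nat_int_diff2)
  have r2: "rs (\<lambda>p. nat (- \<alpha> p)) T = (\<lambda>Q. w Q - u Q)"
    using uw(1,2) unfolding rs_def \<alpha>_def supin_def by (intro ext) (simp add: nat_int_diff nat_int_diff2)

  have fd: "fs (\<lambda>Q. w Q - u Q)" using fs_diff supin_fs[OF uw(2) T] by blast
  have "Ph (\<lambda>Q. u Q - w Q) = Ph (\<lambda>Q. w Q - u Q)" using Ph_minus[OF uw(1,2) T] uw(4) by blast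
  then have "finprod G (\<lambda>p. cls H p [^]\<^bsub>G\<^esub> \<alpha> p) T = \<one>\<^bsub>G\<^esub>"
    unfolding finprod_int[OF finT[OF T] TX[OF T]] r1 r2 using Ph_carrier[OF fd] by simp
  moreover have "\<alpha> p \<noteq> 0" using p unfolding \<alpha>_def by simp
  ultimately show "\<exists>\<alpha>::'a set \<Rightarrow> int. (\<exists>p\<in>T. \<alpha> p \<noteq> 0) \<and> finprod G (\<lambda>p. cls H p [^]\<^bsub>G\<^esub> \<alpha> p) T = \<one>\<^bsub>G\<^esub>"
    using pT by (intro exI[of _ \<alpha>] conjI bexI[of _ p]) 
qed

end

context kS
begin

definition NS :: "'a set set \<Rightarrow> bool" where
  "NS T \<longleftrightarrow> (\<exists>e. supin e T \<and> e \<noteq> (\<lambda>_. 0) \<and> Ph e = \<one>\<^bsub>G\<^esub>)"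
definition ZS :: "'a set set \<Rightarrow> bool" where
  "ZS T \<longleftrightarrow> (\<exists>u w. supin u T \<and> supin w T \<and> u \<noteq> w \<and> Ph u = Ph w)"

lemma supin_ev: "supin (ev a) T \<longleftrightarrow> supp0 (ev a) \<subseteq> T"
  unfolding supin_def supp0_def by auto

lemma rel_ev: assumes "supin e T" "T \<subseteq> S" "Ph e = \<one>\<^bsub>G\<^esub>" shows "\<exists>a\<in>H. ev a = e"
  using Ph_one_iff supin_fs assms by blast

lemma ne0: "e \<noteq> (\<lambda>_. 0) \<Longrightarrow> \<exists>p. e p \<noteq> 0"
proof (rule ccontr)
  assume "e \<noteq> (\<lambda>_. 0)" "\<not> (\<exists>p. e p \<noteq> 0)"
  then show False by (simp add: fun_eq_iff)
qed

lemma ev_le_supp: assumes "\<forall>Q. ev x Q \<le> ev b Q" "supp0 (ev b) \<subseteq> T" shows "supp0 (ev x) \<subseteq> T"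
proof
  fix Q assume "Q \<in> supp0 (ev x)"
  then have "0 < ev x Q" unfolding supp0_def by simp
  then have "0 < ev b Q" using assms(1) less_le_trans by blast
  then show "Q \<in> T" using assms(2) unfolding supp0_def by blast
qed

lemma A_B:
  assumes a: "a \<in> H" "abs_irred H a" "supp0 (ev a) = S"
  shows "(\<exists>b\<in>H. b \<notin> unitsH H \<and> supp0 (ev b) = S) \<and>
         (\<forall>b\<in>H. b \<notin> unitsH H \<longrightarrow> supp0 (ev b) \<subseteq> S \<longrightarrow> supp0 (ev b) = S)"
proof
  have ir: "irred H a" using a(2) unfolding abs_irred_def by blast
  show "\<exists>b\<in>H. b \<notin> unitsH H \<and> supp0 (ev b) = S" using a ir irred_nonunit by blast
  show "\<forall>b\<in>H. b \<notin> unitsH H \<longrightarrow> supp0 (ev b) \<subseteq> S \<longrightarrow> supp0 (ev b) = S"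
  proof (intro ballI impI)
    fix b assume b: "b \<in> H" "b \<notin> unitsH H" "supp0 (ev b) \<subseteq> S"
    show "supp0 (ev b) = S"
    proof (rule ccontr)
      assume "supp0 (ev b) \<noteq> S"
      then obtain p0 where p0: "p0 \<in> S" "p0 \<notin> supp0 (ev b)" using b(3) by blast
      then have evb0: "ev b p0 = 0" unfolding supp0_def by simp
      define n where "n = sum (ev b) S"
      have le: "ev b Q \<le> n * ev a Q" for Q
      proof (cases "Q \<in> S")
        case True
        then have "ev b Q \<le> n" unfolding n_def by (rule member_le_sum) (use finS in auto)
        moreover have "1 \<le> ev a Q" using True a(3) unfolding supp0_def by auto
        ultimately show ?thesis by (metis mult.commute mult_le_mono1 nat_mult_1 order_trans)
      next
        case False
        then have "ev b Q = 0" using b(3) unfolding supp0_def by auto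
        then show ?thesis by simp
      qed
      have naH: "nmul n a \<in> H" using nmul_H a(1) .
      have "\<forall>Q. ev b Q \<le> ev (nmul n a) Q" using le ev_nmul[OF a(1)] by simp
      then obtain c where c: "c \<in> H" "nmul n a = b + c" using ev_dvd[OF b(1) naH] by blast
      obtain xs where xs: "xs \<noteq> []" "\<forall>x\<in>set xs. irred H x" "sum_list xs = b" using factor b(1,2) by blast
      then obtain x xs0 where x: "xs = x # xs0" by (cases xs) auto
      have xle: "ev x p0 \<le> ev b p0"
        using ev_sum_list[of xs] xs irred_H x by simp
      obtain L x' where L: "\<forall>y\<in>set L. irred H y" "sum_list L = nmul n a" "x' \<in> set L" "ev x' = ev x"
      proof (cases "c \<in> unitsH H")
        case True
        have "irred H (x + c)" using irred_unit xs(2) x True by simp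
        moreover have "ev (x + c) = ev x"
          using ev_add[OF irred_H c(1)] ev_unit[OF c(1)] True xs(2) x by simp
        moreover have "sum_list ((x + c) # xs0) = nmul n a" using c xs(3) x by (simp add: algebra_simps)
        ultimately show thesis using that[of "(x + c) # xs0" "x + c"] xs(2) x by simp
      next
        case False
        obtain ys where ys: "ys \<noteq> []" "\<forall>y\<in>set ys. irred H y" "sum_list ys = c" using factor c(1) False by blast
        have "sum_list (x # xs0 @ ys) = nmul n a" using c xs(3) x ys(3) by (simp add: algebra_simps)
        moreover have "\<forall>y\<in>set (x # xs0 @ ys). irred H y" using xs(2) x ys(2) by auto
        ultimately show thesis using that[of "x # xs0 @ ys" x] by simp
      qed
      have "associated H x' a" using a(2) L(1,2,3) unfolding abs_irred_def by blast
      then have "ev x' = ev a" using assoc_ev irred_H L(1,3) a(1) by blast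
      then have "ev a p0 = 0" using L(4) xle evb0 by simp
      then show False using p0(1) a(3) unfolding supp0_def by auto
    qed
  qed
qed

lemma B_C:
  assumes "(\<exists>b\<in>H. b \<notin> unitsH H \<and> supp0 (ev b) = S)"
    "(\<forall>b\<in>H. b \<notin> unitsH H \<longrightarrow> supp0 (ev b) \<subseteq> S \<longrightarrow> supp0 (ev b) = S)"
  shows "(\<exists>b. irred H b \<and> supp0 (ev b) = S) \<and>
         (\<forall>b. irred H b \<longrightarrow> supp0 (ev b) \<subseteq> S \<longrightarrow> supp0 (ev b) = S)"
proof
  obtain b where b: "b \<in> H" "b \<notin> unitsH H" "supp0 (ev b) = S" using assms(1) by blast
  obtain u where u: "irred H u" "\<forall>Q. ev u Q \<le> ev b Q" using atom b by blast
  have "supp0 (ev u) \<subseteq> S" using ev_le_supp[OF u(2)] b(3) by simp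
  then have "supp0 (ev u) = S" using assms(2) u(1) irred_H irred_nonunit by blast
  then show "\<exists>b. irred H b \<and> supp0 (ev b) = S" using u(1) by blast
  show "\<forall>b. irred H b \<longrightarrow> supp0 (ev b) \<subseteq> S \<longrightarrow> supp0 (ev b) = S"
    using assms(2) irred_H irred_nonunit by blast
qed

lemma C_D:
  assumes "(\<exists>b. irred H b \<and> supp0 (ev b) = S)"
    "(\<forall>b. irred H b \<longrightarrow> supp0 (ev b) \<subseteq> S \<longrightarrow> supp0 (ev b) = S)"
  shows "NS S \<and> (\<forall>T. T \<subset> S \<longrightarrow> \<not> NS T)"
proof
  obtain u where u: "irred H u" "supp0 (ev u) = S" using assms(1) by blast
  have uH: "u \<in> H" using irred_H u(1) .
  have "supin (ev u) S" using supin_ev u(2) by simp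
  moreover have "ev u \<noteq> (\<lambda>_. 0)" using nonunit_ev uH irred_nonunit u(1) by blast
  moreover have "Ph (ev u) = \<one>\<^bsub>G\<^esub>" using Ph_ev uH .
  ultimately show "NS S" unfolding NS_def by blast
  show "\<forall>T. T \<subset> S \<longrightarrow> \<not> NS T"
  proof (intro allI impI notI)
    fix T assume T: "T \<subset> S" and "NS T"
    then obtain e where e: "supin e T" "e \<noteq> (\<lambda>_. 0)" "Ph e = \<one>\<^bsub>G\<^esub>" unfolding NS_def by blast
    obtain c where c: "c \<in> H" "ev c = e" using rel_ev[OF e(1) _ e(3)] T by blast
    have "c \<notin> unitsH H" using ev_unit c e(2) by simp
    then obtain w where w: "irred H w" "\<forall>Q. ev w Q \<le> ev c Q" using atom c(1) by blast
    have "supp0 (ev c) \<subseteq> T" using e(1) c(2) supin_ev by metis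
    then have wT: "supp0 (ev w) \<subseteq> T" using ev_le_supp[OF w(2)] by simp
    then have "supp0 (ev w) = S" using assms(2) w(1) T by blast
    then show False using wT T by blast
  qed
qed

end

context kS
begin

lemma supinS_fs: "supin e S \<Longrightarrow> fs e" using supin_fs by blast

lemma Ph_fun0: "Ph (\<lambda>_. 0) = \<one>\<^bsub>G\<^esub>" by (rule Ph_0)

lemma supin_0: "supin (\<lambda>_. 0) T" unfolding supin_def by simp

lemma max_ratio:
  fixes bm al :: "'a set \<Rightarrow> nat"
  assumes "finite T" "T \<noteq> {}" "\<forall>p\<in>T. 0 < al p"
  shows "\<exists>p0\<in>T. \<forall>p\<in>T. bm p * al p0 \<le> bm p0 * al p"
  using assms
proof (induction T rule: finite_ne_induct)
  case (singleton x) then show ?case by simp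
next
  case (insert x F)
  then obtain p0 where p0: "p0 \<in> F" "\<forall>p\<in>F. bm p * al p0 \<le> bm p0 * al p" by auto
  show ?case
  proof (cases "bm p0 * al x \<le> bm x * al p0")
    case True
    have "bm p * al x \<le> bm x * al p" if p: "p \<in> F" for p
    proof -
      have c0: "0 < al p0" using insert(5) p0(1) by auto
      have "(bm p * al x) * al p0 = (bm p * al p0) * al x" by (simp add: ac_simps)
      also have "\<dots> \<le> (bm p0 * al p) * al x" using p0(2) p by (intro mult_le_mono1) auto
      also have "\<dots> = (bm p0 * al x) * al p" by (simp add: ac_simps)
      also have "\<dots> \<le> (bm x * al p0) * al p" using True by (intro mult_le_mono1)
      also have "\<dots> = (bm x * al p) * al p0" by (simp add: ac_simps)
      finally show ?thesis using c0 by simp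
    qed
    then show ?thesis by auto
  next
    case False
    then have "bm x * al p0 \<le> bm p0 * al x" by simp
    then show ?thesis using p0 by auto
  qed
qed

lemma D_E:
  assumes NSS: "NS S" and min: "\<forall>T. T \<subset> S \<longrightarrow> \<not> NS T"
  shows "\<forall>T. T \<subset> S \<longrightarrow> \<not> ZS T"
proof -
  obtain \<alpha> where \<alpha>: "supin \<alpha> S" "\<alpha> \<noteq> (\<lambda>_. 0)" "Ph \<alpha> = \<one>\<^bsub>G\<^esub>" using NSS unfolding NS_def by blast
  have fa: "fs \<alpha>" using supinS_fs \<alpha>(1) .
  have pos: "0 < \<alpha> p" if p: "p \<in> S" for p
  proof (rule ccontr)
    assume "\<not> 0 < \<alpha> p"
    then have "supin \<alpha> (S - {p})" using \<alpha>(1) unfolding supin_def by auto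
    then have "NS (S - {p})" using \<alpha> unfolding NS_def by blast
    moreover have "S - {p} \<subset> S" using p by blast
    ultimately show False using min by blast
  qed
  show ?thesis
  proof (intro allI impI notI)
    fix T assume T: "T \<subset> S" and "ZS T"
    then obtain u w where uw: "supin u T" "supin w T" "u \<noteq> w" "Ph u = Ph w" unfolding ZS_def by blast
    have TS: "T \<subseteq> S" using T by blast
    define bp where "bp = (\<lambda>Q. u Q - w Q)"
    define bm where "bm = (\<lambda>Q. w Q - u Q)"
    have sb: "supin bp T" "supin bm T" using uw(1,2) unfolding bp_def bm_def supin_def by simp_all
    have fb: "fs bp" "fs bm" using supin_fs sb TS by blast+
    have Pbb: "Ph bp = Ph bm" unfolding bp_def bm_def using Ph_minus[OF uw(1,2) TS] uw(4) by blast
    show False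
    proof (cases "bm = (\<lambda>_. 0)")
      case True
      have "bp \<noteq> (\<lambda>_. 0)"
      proof
        assume "bp = (\<lambda>_. 0)"
        then have "u Q = w Q" for Q using True unfolding bp_def bm_def by (simp add: fun_eq_iff) (metis diff_is_0_eq le_antisym)
        then show False using uw(3) by (simp add: fun_eq_iff)
      qed
      moreover have "Ph bp = \<one>\<^bsub>G\<^esub>" using Pbb True Ph_0 by simp
      ultimately have "NS T" using sb(1) unfolding NS_def by blast
      then show False using min T by blast
    next
      case False
      then obtain p1 where p1: "bm p1 \<noteq> 0" using ne0 by blast
      then have p1T: "p1 \<in> T" by (rule contrapos_np) (use sb(2) in \<open>simp add: supin_def\<close>)
      have "finite T" "T \<noteq> {}" using finT TS p1T by auto
      moreover have "\<forall>p\<in>T. 0 < \<alpha> p" using pos TS by blast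
      ultimately obtain p0 where p0: "p0 \<in> T" "\<forall>p\<in>T. bm p * \<alpha> p0 \<le> bm p0 * \<alpha> p"
        using max_ratio by blast
      have ap0: "0 < \<alpha> p0" using pos p0(1) TS by blast
      have "0 < bm p1 * \<alpha> p0" using p1 ap0 by simp
      then have bm0: "0 < bm p0" using p0(2) p1T by (metis gr0I mult_is_0 not_le)
      define c where "c = bm p0"
      define k where "k = \<alpha> p0"
      have ineq: "k * bm Q \<le> c * \<alpha> Q" for Q
      proof (cases "Q \<in> T")
        case True then show ?thesis using p0(2) unfolding c_def k_def by (simp add: mult.commute)
      next
        case False then have "bm Q = 0" using sb(2) unfolding supin_def by blast
        then show ?thesis by simp
      qed
      define \<gamma> where "\<gamma> = (\<lambda>Q. c * \<alpha> Q + k * bp Q - k * bm Q)"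
      have eq: "(\<lambda>Q. \<gamma> Q + k * bm Q) = (\<lambda>Q. c * \<alpha> Q + k * bp Q)"
        unfolding \<gamma>_def using ineq by (intro ext) (metis add.commute diff_add_inverse le_add_diff_inverse2 trans_le_add1 add_diff_assoc2 le_add2)
      have sg: "supin \<gamma> (S - {p0})"
        unfolding supin_def
      proof (intro allI impI)
        fix Q assume Q: "Q \<notin> S - {p0}"
        show "\<gamma> Q = 0"
        proof (cases "Q = p0")
          case True
          have "bp p0 = 0" using bm0 unfolding bp_def bm_def by simp
          then show ?thesis using True unfolding \<gamma>_def c_def k_def by simp
        next
          case False
          then have "Q \<notin> S" using Q by blast
          then have "\<alpha> Q = 0" "bp Q = 0" "bm Q = 0" using \<alpha>(1) sb TS unfolding supin_def by blast+
          then show ?thesis unfolding \<gamma>_def by simp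
        qed
      qed
      have fg: "fs \<gamma>" using supin_fs sg by blast
      have "Ph \<gamma> \<otimes>\<^bsub>G\<^esub> Ph (\<lambda>Q. k * bm Q) = Ph (\<lambda>Q. c * \<alpha> Q) \<otimes>\<^bsub>G\<^esub> Ph (\<lambda>Q. k * bp Q)"
        using Ph_add[OF fg fs_smult[OF fb(2), of k]] Ph_add[OF fs_smult[OF fa, of c] fs_smult[OF fb(1), of k]] eq by simp
      also have "\<dots> = Ph (\<lambda>Q. k * bm Q)"
        using Ph_smult[OF fa, of c] \<alpha>(3) Ph_smult[OF fb(1)] Ph_smult[OF fb(2)] Pbb Ph_carrier fb by simp
      finally have "Ph \<gamma> = \<one>\<^bsub>G\<^esub>"
        using Ph_carrier[OF fg] Ph_carrier[OF fs_smult[OF fb(2)]] by simp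
      moreover have "\<gamma> \<noteq> (\<lambda>_. 0)"
      proof -
        obtain q where q: "q \<in> S" "q \<notin> T" using T by blast
        then have "bp q = 0" "bm q = 0" using sb unfolding supin_def by blast+
        moreover have "0 < c * \<alpha> q" using bm0 pos[OF q(1)] unfolding c_def by simp
        ultimately have "0 < \<gamma> q" unfolding \<gamma>_def by simp
        then show ?thesis by (auto simp: fun_eq_iff)
      qed
      ultimately have "NS (S - {p0})" using sg unfolding NS_def by blast
      moreover have "S - {p0} \<subset> S" using p0(1) TS by blast
      ultimately show False using min by blast
    qed
  qed
qed

end

locale kSE = kS +
  assumes NSS: "NS S" and noZ: "\<forall>T. T \<subset> S \<longrightarrow> \<not> ZS T"
begin

lemma posE: assumes "supin e S" "Ph e = \<one>\<^bsub>G\<^esub>" "e \<noteq> (\<lambda>_. 0)" "p \<in> S" shows "0 < e p"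
proof (rule ccontr)
  assume "\<not> 0 < e p"
  then have "supin e (S - {p})" using assms(1) unfolding supin_def by auto
  moreover have "supin (\<lambda>_. 0) (S - {p})" by (rule supin_0)
  moreover have "Ph e = Ph (\<lambda>_. 0)" using assms(2) Ph_0 by simp
  ultimately have "ZS (S - {p})" using assms(3) unfolding ZS_def by blast
  moreover have "S - {p} \<subset> S" using assms(4) by blast
  ultimately show False using noZ by blast
qed

lemma propE: assumes e1: "supin e1 S" "Ph e1 = \<one>\<^bsub>G\<^esub>" and e2: "supin e2 S" "Ph e2 = \<one>\<^bsub>G\<^esub>"
  and p0: "p0 \<in> S"
  shows "e2 p0 * e1 Q = e1 p0 * e2 Q"
proof -
  define x where "x = (\<lambda>Q. e2 p0 * e1 Q)"
  define y where "y = (\<lambda>Q. e1 p0 * e2 Q)"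
  have f: "fs e1" "fs e2" using supinS_fs e1(1) e2(1) by blast+
  have sx: "supin x S" "supin y S" using e1(1) e2(1) unfolding supin_def x_def y_def by simp_all
  have Px: "Ph x = \<one>\<^bsub>G\<^esub>" "Ph y = \<one>\<^bsub>G\<^esub>"
    unfolding x_def y_def using Ph_smult f e1(2) e2(2) by simp_all
  have "Ph (\<lambda>Q. x Q - y Q) = Ph (\<lambda>Q. y Q - x Q)" using Ph_minus[OF sx order_refl] Px by simp
  moreover have "supin (\<lambda>Q. x Q - y Q) (S - {p0})" "supin (\<lambda>Q. y Q - x Q) (S - {p0})"
    using sx unfolding supin_def x_def y_def by (auto simp: mult.commute)
  moreover have "S - {p0} \<subset> S" using p0 by blast
  ultimately have "(\<lambda>Q. x Q - y Q) = (\<lambda>Q. y Q - x Q)" using noZ unfolding ZS_def by blast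
  then have "x Q - y Q = y Q - x Q" by metis
  then have "x Q = y Q" by simp
  then show ?thesis unfolding x_def y_def .
qed

definition PP :: "'a set \<Rightarrow> nat \<Rightarrow> bool" where
  "PP p0 k \<longleftrightarrow> (\<exists>e. supin e S \<and> Ph e = \<one>\<^bsub>G\<^esub> \<and> e \<noteq> (\<lambda>_. 0) \<and> e p0 = k)"

definition p0 :: "'a set" where "p0 = (SOME p. p \<in> S)"
lemma p0S: "p0 \<in> S" unfolding p0_def using neS by (simp add: some_in_eq)

definition k0 :: nat where "k0 = (LEAST k. PP p0 k)"

lemma exPP: "PP p0 k0"
proof -
  obtain \<alpha> where \<alpha>: "supin \<alpha> S" "\<alpha> \<noteq> (\<lambda>_. 0)" "Ph \<alpha> = \<one>\<^bsub>G\<^esub>" using NSS unfolding NS_def by blast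
  then have "PP p0 (\<alpha> p0)" unfolding PP_def by blast
  then show ?thesis unfolding k0_def by (rule LeastI)
qed

definition gam :: "'a set \<Rightarrow> nat" where
  "gam = (SOME e. supin e S \<and> Ph e = \<one>\<^bsub>G\<^esub> \<and> e \<noteq> (\<lambda>_. 0) \<and> e p0 = k0)"

lemma gam: "supin gam S" "Ph gam = \<one>\<^bsub>G\<^esub>" "gam \<noteq> (\<lambda>_. 0)" "gam p0 = k0"
proof -
  have "\<exists>e. supin e S \<and> Ph e = \<one>\<^bsub>G\<^esub> \<and> e \<noteq> (\<lambda>_. 0) \<and> e p0 = k0" using exPP unfolding PP_def .
  then have "supin gam S \<and> Ph gam = \<one>\<^bsub>G\<^esub> \<and> gam \<noteq> (\<lambda>_. 0) \<and> gam p0 = k0"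
    unfolding gam_def by (rule someI_ex)
  then show "supin gam S" "Ph gam = \<one>\<^bsub>G\<^esub>" "gam \<noteq> (\<lambda>_. 0)" "gam p0 = k0" by blast+
qed

lemma gam_pos: "p \<in> S \<Longrightarrow> 0 < gam p" using posE gam by blast

lemma fs_gam: "fs gam" using supinS_fs gam(1) .

lemma multE: assumes e: "supin e S" "Ph e = \<one>\<^bsub>G\<^esub>" shows "\<exists>q. e = (\<lambda>Q. q * gam Q)"
proof -
  have g0: "0 < gam p0" using gam_pos p0S .
  define q where "q = e p0 div gam p0"
  define r where "r = e p0 mod gam p0"
  have epr: "e p0 = q * gam p0 + r" unfolding q_def r_def by simp
  have pr: "e p0 * gam Q = gam p0 * e Q" for Q using propE[OF gam(1,2) e p0S] by simp
  have le: "q * gam Q \<le> e Q" for Q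
  proof -
    have "gam p0 * (q * gam Q) = (q * gam p0) * gam Q" by (simp add: ac_simps)
    also have "\<dots> \<le> e p0 * gam Q" using epr by (intro mult_le_mono1) simp
    also have "\<dots> = gam p0 * e Q" by (rule pr)
    finally show ?thesis using g0 by simp
  qed
  define e' where "e' = (\<lambda>Q. e Q - q * gam Q)"
  have ee: "e = (\<lambda>Q. q * gam Q + e' Q)" unfolding e'_def using le by (intro ext) (simp add: le_add_diff_inverse)
  have se': "supin e' S" using e(1) unfolding e'_def supin_def by simp
  have fe': "fs e'" using supinS_fs se' .
  have "Ph e = Ph (\<lambda>Q. q * gam Q) \<otimes>\<^bsub>G\<^esub> Ph e'" using Ph_add[OF fs_smult[OF fs_gam, of q] fe'] ee by simp
  also have "Ph (\<lambda>Q. q * gam Q) = \<one>\<^bsub>G\<^esub>" using Ph_smult[OF fs_gam] gam(2) by simp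
  finally have Pe': "Ph e' = \<one>\<^bsub>G\<^esub>" using e(2) Ph_carrier[OF fe'] by simp
  have e'p0: "e' p0 = r" unfolding e'_def using epr by simp
  have "r = 0"
  proof (rule ccontr)
    assume "r \<noteq> 0"
    then have "e' \<noteq> (\<lambda>_. 0)" using e'p0 by (auto simp: fun_eq_iff)
    then have "PP p0 r" unfolding PP_def using se' Pe' e'p0 by blast
    then have "k0 \<le> r" unfolding k0_def by (rule Least_le)
    moreover have "r < gam p0" unfolding r_def using g0 by simp
    ultimately show False using gam(4) by simp
  qed
  have "e' = (\<lambda>_. 0)"
  proof (rule ccontr)
    assume "e' \<noteq> (\<lambda>_. 0)"
    then have "0 < e' p0" using posE[OF se' Pe' _ p0S] by blast
    then show False using e'p0 \<open>r = 0\<close> by simp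
  qed
  then show ?thesis using ee by auto
qed

lemma irred_gam: assumes a: "irred H a" "supp0 (ev a) \<subseteq> S" shows "ev a = gam"
proof -
  have aH: "a \<in> H" using irred_H a(1) .
  have sa: "supin (ev a) S" using a(2) supin_ev by simp
  obtain q where q: "ev a = (\<lambda>Q. q * gam Q)" using multE[OF sa Ph_ev[OF aH]] by blast
  have "q \<noteq> 0" using q nonunit_ev[OF aH irred_nonunit[OF a(1)]] by auto
  moreover have "\<not> 2 \<le> q"
  proof
    assume q2: "2 \<le> q"
    obtain c where c: "c \<in> H" "ev c = gam" using rel_ev[OF gam(1) order_refl gam(2)] by blast
    have "\<forall>Q. ev c Q \<le> ev a Q" using c q q2 by simp
    then obtain d where d: "d \<in> H" "a = c + d" using ev_dvd[OF c(1) aH] by blast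
    have "ev a = (\<lambda>Q. gam Q + ev d Q)" using ev_add[OF c(1) d(1)] c d by simp
    then have "ev d = (\<lambda>Q. (q - 1) * gam Q)" using q q2 by (auto simp: fun_eq_iff diff_mult_distrib)
    then have "d \<notin> unitsH H" using ev_unit[OF d(1)] gam(3) q2 by (auto simp: fun_eq_iff)
    moreover have "c \<notin> unitsH H" using ev_unit[OF c(1)] c(2) gam(3) by simp
    ultimately show False using a(1) c(1) d unfolding irred_def by blast
  qed
  ultimately have "q = 1" by simp
  then show ?thesis using q by simp
qed

lemma E_A: "\<exists>a\<in>H. abs_irred H a \<and> supp0 (ev a) = S"
proof -
  obtain a where a: "a \<in> H" "ev a = gam" using rel_ev[OF gam(1) order_refl gam(2)] by blast
  have nu: "a \<notin> unitsH H" using ev_unit[OF a(1)] a(2) gam(3) by simp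
  have ir: "irred H a"
    unfolding irred_def
  proof (intro conjI ballI impI a(1) nu)
    fix y z assume yz: "y \<in> H" "z \<in> H" "a = y + z"
    have ea: "gam = (\<lambda>Q. ev y Q + ev z Q)" using ev_add[OF yz(1,2)] yz(3) a(2) by simp
    have "supin (ev y) S" "supin (ev z) S" using gam(1) ea unfolding supin_def by (auto simp: fun_eq_iff)
    then obtain q1 q2 where q: "ev y = (\<lambda>Q. q1 * gam Q)" "ev z = (\<lambda>Q. q2 * gam Q)"
      using multE Ph_ev yz by metis
    have "gam p0 = (q1 + q2) * gam p0" using ea q by (simp add: fun_eq_iff add_mult_distrib)
    then have "q1 + q2 = 1" using gam_pos[OF p0S] by simp
    then have "q1 = 0 \<or> q2 = 0" by arith
    then show "y \<in> unitsH H \<or> z \<in> unitsH H" using q ev_unit yz by auto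
  qed
  have ab: "abs_irred H a"
    unfolding abs_irred_def
  proof (intro conjI ir allI impI)
    fix n xs assume xs: "(\<forall>x\<in>set xs. irred H x) \<and> sum_list xs = nmul n a"
    have xH: "\<forall>x\<in>set xs. x \<in> H" using xs irred_H by blast
    have evs: "ev (nmul n a) = (\<lambda>Q. \<Sum>x\<leftarrow>xs. ev x Q)" using ev_sum_list[OF xH] xs by simp
    have eg: "ev x = gam" if x: "x \<in> set xs" for x
    proof (rule irred_gam)
      show "irred H x" using xs x by blast
      have "ev x Q \<le> ev (nmul n a) Q" for Q unfolding evs using x by (induction xs) auto
      then have "\<forall>Q. ev x Q \<le> ev (nmul n a) Q" by blast
      moreover have "supp0 (ev (nmul n a)) \<subseteq> S"
        unfolding ev_nmul[OF a(1)] a(2) using gam(1) unfolding supp0_def supin_def by auto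
      ultimately show "supp0 (ev x) \<subseteq> S" by (rule ev_le_supp)
    qed
    have "(\<Sum>x\<leftarrow>xs. ev x p0) = length xs * gam p0" using eg by (induction xs) auto
    moreover have "ev (nmul n a) p0 = n * gam p0" using ev_nmul[OF a(1)] a(2) by simp
    ultimately have "length xs * gam p0 = n * gam p0" using evs by metis
    then show "length xs = n" using gam_pos[OF p0S] by simp
    show "\<forall>x\<in>set xs. associated H x a" using eg assoc_ev xH a by auto
  qed
  have "supp0 (ev a) = S"
    using a(2) gam_pos gam(1) unfolding supp0_def supin_def by auto
  then show ?thesis using a(1) ab by blast
qed

lemma uniqE: "a \<in> H \<Longrightarrow> b \<in> H \<Longrightarrow> irred H a \<Longrightarrow> supp0 (ev a) = S \<Longrightarrow> irred H b \<Longrightarrow> supp0 (ev b) = S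
  \<Longrightarrow> associated H a b"
proof -
  assume a: "a \<in> H" "b \<in> H" "irred H a" "supp0 (ev a) = S" "irred H b" "supp0 (ev b) = S"
  have "ev a = gam" by (rule irred_gam) (use a in blast)+
  moreover have "ev b = gam" by (rule irred_gam) (use a in blast)+
  ultimately show ?thesis using assoc_ev a by simp
qed

end

theorem mainTheorem11:
  fixes H :: "'a::ab_group_add set" and S :: "'a set set"
  assumes "krull_monoid H"
    and "finite S" and "S \<noteq> {}" and "S \<subseteq> XH H"
  defines "G \<equiv> class_group H"
  defines "A \<equiv> (\<exists>a\<in>H. abs_irred H a \<and> supp H (pideal H a) = S)"
  defines "B \<equiv> (S \<in> {supp H (pideal H b) | b. b \<in> H - unitsH H} \<and>
                 (\<forall>b\<in>H - unitsH H. supp H (pideal H b) \<subseteq> S \<longrightarrow> supp H (pideal H b) = S))"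
  defines "C \<equiv> (S \<in> {supp H (pideal H b) | b. irred H b} \<and>
                 (\<forall>b. irred H b \<longrightarrow> supp H (pideal H b) \<subseteq> S \<longrightarrow> supp H (pideal H b) = S))"
  defines "D \<equiv> ((\<exists>\<alpha>::'a set \<Rightarrow> nat. (\<exists>p\<in>S. \<alpha> p \<noteq> 0) \<and>
                    finprod G (\<lambda>p. cls H p [^]\<^bsub>G\<^esub> \<alpha> p) S = \<one>\<^bsub>G\<^esub>) \<and>
                (\<forall>T. T \<subset> S \<longrightarrow> \<not> (\<exists>\<alpha>::'a set \<Rightarrow> nat. (\<exists>p\<in>T. \<alpha> p \<noteq> 0) \<and>
                    finprod G (\<lambda>p. cls H p [^]\<^bsub>G\<^esub> \<alpha> p) T = \<one>\<^bsub>G\<^esub>)))"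
  defines "E \<equiv> ((\<exists>\<alpha>::'a set \<Rightarrow> nat. (\<exists>p\<in>S. \<alpha> p \<noteq> 0) \<and>
                    finprod G (\<lambda>p. cls H p [^]\<^bsub>G\<^esub> \<alpha> p) S = \<one>\<^bsub>G\<^esub>) \<and>
                (\<forall>T. T \<subset> S \<longrightarrow> \<not> (\<exists>\<alpha>::'a set \<Rightarrow> int. (\<exists>p\<in>T. \<alpha> p \<noteq> 0) \<and>
                    finprod G (\<lambda>p. cls H p [^]\<^bsub>G\<^esub> \<alpha> p) T = \<one>\<^bsub>G\<^esub>)))"
  shows "(A \<longleftrightarrow> B) \<and> (A \<longleftrightarrow> C) \<and> (A \<longleftrightarrow> D) \<and> (A \<longleftrightarrow> E) \<and>
         (A \<longrightarrow> (\<forall>a\<in>H. \<forall>b\<in>H. abs_irred H a \<and> supp H (pideal H a) = S \<and>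
                  abs_irred H b \<and> supp H (pideal H b) = S \<longrightarrow> associated H a b))"
proof -
  interpret kS H S using assms(1-4) by unfold_locales
  have GG: "G = class_group H" unfolding G_def ..
  have CA: "A \<longleftrightarrow> (\<exists>a\<in>H. abs_irred H a \<and> supp0 (ev a) = S)"
    unfolding A_def using supp_ev by auto
  have CB: "B \<longleftrightarrow> (\<exists>b\<in>H. b \<notin> unitsH H \<and> supp0 (ev b) = S) \<and>
         (\<forall>b\<in>H. b \<notin> unitsH H \<longrightarrow> supp0 (ev b) \<subseteq> S \<longrightarrow> supp0 (ev b) = S)"
  proof -
    have 1: "S \<in> {supp H (pideal H b) | b. b \<in> H - unitsH H} \<longleftrightarrow> (\<exists>b\<in>H. b \<notin> unitsH H \<and> supp0 (ev b) = S)"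
      using supp_ev by auto
    have 2: "(\<forall>b\<in>H - unitsH H. supp H (pideal H b) \<subseteq> S \<longrightarrow> supp H (pideal H b) = S) \<longleftrightarrow>
        (\<forall>b\<in>H. b \<notin> unitsH H \<longrightarrow> supp0 (ev b) \<subseteq> S \<longrightarrow> supp0 (ev b) = S)"
      using supp_ev by auto
    show ?thesis unfolding B_def 1 2 ..
  qed
  have CC: "C \<longleftrightarrow> (\<exists>b. irred H b \<and> supp0 (ev b) = S) \<and>
         (\<forall>b. irred H b \<longrightarrow> supp0 (ev b) \<subseteq> S \<longrightarrow> supp0 (ev b) = S)"
  proof -
    have 1: "S \<in> {supp H (pideal H b) | b. irred H b} \<longleftrightarrow> (\<exists>b. irred H b \<and> supp0 (ev b) = S)"
      using supp_ev irred_H by auto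
    have 2: "(\<forall>b. irred H b \<longrightarrow> supp H (pideal H b) \<subseteq> S \<longrightarrow> supp H (pideal H b) = S) \<longleftrightarrow>
        (\<forall>b. irred H b \<longrightarrow> supp0 (ev b) \<subseteq> S \<longrightarrow> supp0 (ev b) = S)"
      using supp_ev irred_H by auto
    show ?thesis unfolding C_def 1 2 ..
  qed
  have d1: "(\<exists>\<alpha>::'a set \<Rightarrow> nat. (\<exists>p\<in>S. \<alpha> p \<noteq> 0) \<and>
                    finprod G (\<lambda>p. cls H p [^]\<^bsub>G\<^esub> \<alpha> p) S = \<one>\<^bsub>G\<^esub>) \<longleftrightarrow> NS S"
    unfolding GG NS_def by (rule DN_iff[OF order_refl])
  have d2: "(\<exists>\<alpha>::'a set \<Rightarrow> nat. (\<exists>p\<in>T. \<alpha> p \<noteq> 0) \<and>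
                    finprod G (\<lambda>p. cls H p [^]\<^bsub>G\<^esub> \<alpha> p) T = \<one>\<^bsub>G\<^esub>) \<longleftrightarrow> NS T" if "T \<subset> S" for T
    unfolding GG NS_def by (rule DN_iff) (use that in blast)
  have d3: "(\<exists>\<alpha>::'a set \<Rightarrow> int. (\<exists>p\<in>T. \<alpha> p \<noteq> 0) \<and>
                    finprod G (\<lambda>p. cls H p [^]\<^bsub>G\<^esub> \<alpha> p) T = \<one>\<^bsub>G\<^esub>) \<longleftrightarrow> ZS T" if "T \<subset> S" for T
    unfolding GG ZS_def by (rule DZ_iff) (use that in blast)
  have CD: "D \<longleftrightarrow> NS S \<and> (\<forall>T. T \<subset> S \<longrightarrow> \<not> NS T)"
  proof -
    have "(\<forall>T. T \<subset> S \<longrightarrow> \<not> (\<exists>\<alpha>::'a set \<Rightarrow> nat. (\<exists>p\<in>T. \<alpha> p \<noteq> 0) \<and> finprod G (\<lambda>p. cls H p [^]\<^bsub>G\<^esub> \<alpha> p) T = \<one>\<^bsub>G\<^esub>)) \<longleftrightarrow> (\<forall>T. T \<subset> S \<longrightarrow> \<not> NS T)"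
    proof (intro iffI allI impI)
      fix T assume h: "\<forall>T. T \<subset> S \<longrightarrow> \<not> (\<exists>\<alpha>::'a set \<Rightarrow> nat. (\<exists>p\<in>T. \<alpha> p \<noteq> 0) \<and> finprod G (\<lambda>p. cls H p [^]\<^bsub>G\<^esub> \<alpha> p) T = \<one>\<^bsub>G\<^esub>)" and T: "T \<subset> S"
      show "\<not> NS T" using h[rule_format, OF T] unfolding d2[OF T] .
    next
      fix T assume h: "\<forall>T. T \<subset> S \<longrightarrow> \<not> NS T" and T: "T \<subset> S"
      show "\<not> (\<exists>\<alpha>::'a set \<Rightarrow> nat. (\<exists>p\<in>T. \<alpha> p \<noteq> 0) \<and> finprod G (\<lambda>p. cls H p [^]\<^bsub>G\<^esub> \<alpha> p) T = \<one>\<^bsub>G\<^esub>)" using h[rule_format, OF T] unfolding d2[OF T] .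
    qed
    then show ?thesis unfolding D_def d1 by simp
  qed
  have CE: "E \<longleftrightarrow> NS S \<and> (\<forall>T. T \<subset> S \<longrightarrow> \<not> ZS T)"
  proof -
    have "(\<forall>T. T \<subset> S \<longrightarrow> \<not> (\<exists>\<alpha>::'a set \<Rightarrow> int. (\<exists>p\<in>T. \<alpha> p \<noteq> 0) \<and> finprod G (\<lambda>p. cls H p [^]\<^bsub>G\<^esub> \<alpha> p) T = \<one>\<^bsub>G\<^esub>)) \<longleftrightarrow> (\<forall>T. T \<subset> S \<longrightarrow> \<not> ZS T)"
    proof (intro iffI allI impI)
      fix T assume h: "\<forall>T. T \<subset> S \<longrightarrow> \<not> (\<exists>\<alpha>::'a set \<Rightarrow> int. (\<exists>p\<in>T. \<alpha> p \<noteq> 0) \<and> finprod G (\<lambda>p. cls H p [^]\<^bsub>G\<^esub> \<alpha> p) T = \<one>\<^bsub>G\<^esub>)" and T: "T \<subset> S"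
      show "\<not> ZS T" using h[rule_format, OF T] unfolding d3[OF T] .
    next
      fix T assume h: "\<forall>T. T \<subset> S \<longrightarrow> \<not> ZS T" and T: "T \<subset> S"
      show "\<not> (\<exists>\<alpha>::'a set \<Rightarrow> int. (\<exists>p\<in>T. \<alpha> p \<noteq> 0) \<and> finprod G (\<lambda>p. cls H p [^]\<^bsub>G\<^esub> \<alpha> p) T = \<one>\<^bsub>G\<^esub>)" using h[rule_format, OF T] unfolding d3[OF T] .
    qed
    then show ?thesis unfolding E_def d1 by simp
  qed
  have AB: "A \<Longrightarrow> B" using A_B unfolding CA CB by blast
  have BC: "B \<Longrightarrow> C" using B_C unfolding CB CC by blast
  have CD': "C \<Longrightarrow> D" using C_D unfolding CC CD by blast
  have DE: "D \<Longrightarrow> E" using D_E unfolding CD CE by blast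
  have EA: "E \<Longrightarrow> A"
  proof -
    assume E
    then interpret kSE H S by unfold_locales (use CE in blast)+
    show A using E_A CA by blast
  qed
  have U: "A \<Longrightarrow> (\<forall>a\<in>H. \<forall>b\<in>H. abs_irred H a \<and> supp H (pideal H a) = S \<and>
                  abs_irred H b \<and> supp H (pideal H b) = S \<longrightarrow> associated H a b)"
  proof -
    assume A
    then have E using AB BC CD' DE by blast
    then interpret kSE H S by unfold_locales (use CE in blast)+
    show ?thesis
    proof (intro ballI impI)
      fix a b assume ab: "a \<in> H" "b \<in> H"
        "abs_irred H a \<and> supp H (pideal H a) = S \<and> abs_irred H b \<and> supp H (pideal H b) = S"
      have "irred H a" "irred H b" using ab(3) unfolding abs_irred_def by blast+
      moreover have "supp0 (ev a) = S" "supp0 (ev b) = S" using ab(3) supp_ev[OF ab(1)] supp_ev[OF ab(2)] by simp_all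
      ultimately show "associated H a b" using uniqE ab(1,2) by blast
    qed
  qed
  show ?thesis using AB BC CD' DE EA U by blast
qed

end
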